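(* Assume $\langle f\rangle_X=0$ and that $\psi$ satisfies (A1) and (A2), and let $e_{\rm mod}$ be the modeling error. Then: (a) there exists a constant $C_{10}$ such that $\|e_{\rm mod}\|_{L^2}\le\frac1{2\sqrt3}|e_{\rm mod}|_{H^1}\le C_{10}H|f|_{H^{-1}}$; (b) if additionally there are constants $C_{\rm coll},C''_{\psi^0}$ with $\bigl|X_{i_k^{\rm coll}}-\frac{X_{i_k}+X_{i_{k+1}-1}}2\bigr|\le\epsilon C_{\rm coll}$ for all $k$ and $\|D^2\psi^0\|_{L^\infty}\le C''_{\psi^0}$, then there exist constants $C_{11},C_{12}$ such that $\|e_{\rm mod}\|_{L^2}\le\frac1{2\sqrt3}|e_{\rm mod}|_{H^1}\le(C_{11}H^2+C_{12}\epsilon)|f|_{H^{-1}}$; (c) if $\psi(X_i,Y_j)$ does not depend on $X_i$, then $e_{\rm mod}=0$. Here the constants depend only on $c_\psi,C_\psi,C'_\psi,C_{\rm coll},C''_{\psi^0}$ and $p$, and are independent of $\epsilon$, $H$ and $f$.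
   Context: Let $\epsilon>0$, $N,p$ positive integers with normalization $N\epsilon=1$; $X_i=\epsilon i$, $Y_j=j$. $U^N_{\rm per}(\epsilon\mathbb Z)$: functions $u:\epsilon\mathbb Z\to\mathbb R$ with $u(X_{i+N})=u(X_i)$; $U^N_\#(\epsilon\mathbb Z)$: those with $\langle u\rangle_X:=\frac1N\sum_{i=1}^Nu(X_i)=0$. $\langle u,v\rangle_X=\frac1N\sum_{i=1}^Nu(X_i)v(X_i)$, $Du(X_i)=(u(X_{i+1})-u(X_i))/\epsilon$, $\|u\|_{L^2}=\langle u,u\rangle_X^{1/2}$, $\|u\|_{L^\infty}=\max_{1\le i\le N}|u(X_i)|$, $|u|_{H^1}=\|Du\|_{L^2}$, $|u|_{H^{-1}}=\sup\{\langle u,w\rangle_X/|w|_{H^1}:0\ne w\in U^N_\#(\epsilon\mathbb Z)\}$. $U^p_\#(\epsilon\mathbb Z)$: $p$-periodic functions on $\epsilon\mathbb Z$ with $\sum_{i=1}^p w(X_i)=0$. Two-scale functions $g:\epsilon\mathbb Z\times\mathbb Z\to\mathbb R$ satisfy $g(X_{i+N},Y_j)=g(X_i,Y_j)=g(X_i,Y_{j+p})$; $D_Xg(X_i,Y_j)=(g(X_{i+1},Y_j)-g(X_i,Y_j))/\epsilon$, $\langle g\rangle_Y(X_i)=\frac1p\sum_{j=1}^pg(X_i,Y_j)$, $\|g\|_{L^\infty(N,p)}=\max_{1\le i\le N,1\le j\le p}|g|$. $\psi$ is a two-scale function with (A1) $0<c_\psi\le\psi\le C_\psi$ and (A2) $\|D_X\psi\|_{L^\infty(N,p)}\le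 C'_\psi$. $\psi^0(X_i)=\langle1/\psi(X_i,\cdot)\rangle_Y^{-1}$. $f\in U^N_{\rm per}(\epsilon\mathbb Z)$. HQC method: fix indices $1=i_1<\dots<i_K\le N$, $i_{K+1}=N+1$, elements $S_k=\{X_i:i_k\le i<i_{k+1}\}$, $H_k=\epsilon(i_{k+1}-i_k)$, $H=\max_kH_k$. $U^H_{\rm per}$: $v\in U^N_{\rm per}(\epsilon\mathbb Z)$ affine on each $\{X_i:i_k\le i\le i_{k+1}\}$; $U^H_\#=U^H_{\rm per}\cap U^N_\#(\epsilon\mathbb Z)$. In each $S_k$ choose a sampling domain $S_k^{\rm rep}=\{X_i:i_k^{\rm rep}\le i<i_k^{\rm rep}+p\}\subset S_k$ and a collocation index with $X_{i_k^{\rm coll}}\in S_k^{\rm rep}$; $\psi^\epsilon_{{\rm coll},k}(X_i)=\psi(X_{i_k^{\rm coll}},X_i/\epsilon)$, $\langle a,b\rangle_{S_k^{\rm rep}}=\frac1p\sum_{X_i\in S_k^{\rm rep}}a(X_i)b(X_i)$. For $v^H\in U^H_{\rm per}$ let $\ell_k$ be the affine function on $\epsilon\mathbb Z$ equal to $v^H$ on $S_k$; $\mathcal R_k(v^H)=\ell_k+w$ with $w\in U^p_\#(\epsilon\mathbb Z)$ such that $\langle\psi^\epsilon_{{\rm coll},k}D(\ell_k+w),Ds\rangle_{S_k^{\rm rep}}=0$ for all $s\in U^p_\#(\epsilon\mathbb Z)$. HQC problem: $u^H\in U^H_\#$ with $\sum_{k=1}^KH_k\langle\psi^\epsilon_{{\rm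 coll},k}D\mathcal R_k(u^H),D\mathcal R_k(v^H)\rangle_{S_k^{\rm rep}}=\langle f,v^H\rangle_X$ for all $v^H\in U^H_\#$. Modeling error: $e_{\rm mod}=u^H-\tilde u^H$, where $\tilde u^H\in U^H_\#$ solves $\langle\psi^0D\tilde u^H,Dv^H\rangle_X=\langle f,v^H\rangle_X$ for all $v^H\in U^H_\#$. *)

theory Defs
  imports Complex_Main
begin

text \<open>Grid functions on eps*Z are represented by their values at the
 grid indices: u :: int => real with u i = u(X_i), X_i = eps*i, eps = 1/N.
 Two-scale functions g :: int => int => real with g i j = g(X_i, Y_j).\<close>

definition eps :: "nat \<Rightarrow> real" where
  "eps N = 1 / real N"

definition per :: "nat \<Rightarrow> (int \<Rightarrow> real) \<Rightarrow> bool" where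
  "per N u \<longleftrightarrow> (\<forall>i. u (i + int N) = u i)"

definition avgX :: "nat \<Rightarrow> (int \<Rightarrow> real) \<Rightarrow> real" where
  "avgX N u = (1 / real N) * (\<Sum>i\<in>{1..int N}. u i)"

definition ipX :: "nat \<Rightarrow> (int \<Rightarrow> real) \<Rightarrow> (int \<Rightarrow> real) \<Rightarrow> real" where
  "ipX N u v = (1 / real N) * (\<Sum>i\<in>{1..int N}. u i * v i)"

definition Dd :: "nat \<Rightarrow> (int \<Rightarrow> real) \<Rightarrow> int \<Rightarrow> real" where
  "Dd N u = (\<lambda>i. (u (i + 1) - u i) / eps N)"

definition L2 :: "nat \<Rightarrow> (int \<Rightarrow> real) \<Rightarrow> real" where
  "L2 N u = sqrt (ipX N u u)"

definition Linf :: "nat \<Rightarrow> (int \<Rightarrow> real) \<Rightarrow> real" where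
  "Linf N u = Max ((\<lambda>i. \<bar>u i\<bar>) ` {1..int N})"

definition H1 :: "nat \<Rightarrow> (int \<Rightarrow> real) \<Rightarrow> real" where
  "H1 N u = L2 N (Dd N u)"

definition Uzero :: "nat \<Rightarrow> (int \<Rightarrow> real) set" where
  "Uzero N = {u. per N u \<and> avgX N u = 0}"

text \<open>H^{-1} seminorm. The value 0 is inserted so that the supremum is
 well defined also when U^N_# = {0} (N = 1); for N >= 2 the set is symmetric
 under w -> -w, so this does not change the supremum.\<close>
definition Hm1 :: "nat \<Rightarrow> (int \<Rightarrow> real) \<Rightarrow> real" where
  "Hm1 N u = Sup (insert 0 {ipX N u w / H1 N w | w. w \<in> Uzero N \<and> w \<noteq> (\<lambda>_. 0)})"

definition twoscale :: "nat \<Rightarrow> nat \<Rightarrow> (int \<Rightarrow> int \<Rightarrow> real) \<Rightarrow> bool" where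
  "twoscale N p g \<longleftrightarrow> (\<forall>i j. g (i + int N) j = g i j \<and> g i (j + int p) = g i j)"

definition DX :: "nat \<Rightarrow> (int \<Rightarrow> int \<Rightarrow> real) \<Rightarrow> int \<Rightarrow> int \<Rightarrow> real" where
  "DX N g = (\<lambda>i j. (g (i + 1) j - g i j) / eps N)"

definition avgY :: "nat \<Rightarrow> (int \<Rightarrow> int \<Rightarrow> real) \<Rightarrow> int \<Rightarrow> real" where
  "avgY p g i = (1 / real p) * (\<Sum>j\<in>{1..int p}. g i j)"

definition psi0 :: "nat \<Rightarrow> (int \<Rightarrow> int \<Rightarrow> real) \<Rightarrow> int \<Rightarrow> real" where
  "psi0 p psi = (\<lambda>i. 1 / avgY p (\<lambda>i j. 1 / psi i j) i)"

definition A1 :: "nat \<Rightarrow> nat \<Rightarrow> (int \<Rightarrow> int \<Rightarrow> real) \<Rightarrow> real \<Rightarrow> real \<Rightarrow> bool" where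
  "A1 N p psi c C \<longleftrightarrow> 0 < c \<and> (\<forall>i\<in>{1..int N}. \<forall>j\<in>{1..int p}. c \<le> psi i j \<and> psi i j \<le> C)"

definition A2 :: "nat \<Rightarrow> nat \<Rightarrow> (int \<Rightarrow> int \<Rightarrow> real) \<Rightarrow> real \<Rightarrow> bool" where
  "A2 N p psi C' \<longleftrightarrow> (\<forall>i\<in>{1..int N}. \<forall>j\<in>{1..int p}. \<bar>DX N psi i j\<bar> \<le> C')"

definition mesh :: "nat \<Rightarrow> nat \<Rightarrow> (nat \<Rightarrow> int) \<Rightarrow> bool" where
  "mesh N K idx \<longleftrightarrow> 1 \<le> K \<and> idx 1 = 1 \<and> (\<forall>k\<in>{1..<K}. idx k < idx (Suc k))
     \<and> idx K \<le> int N \<and> idx (Suc K) = int N + 1"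

definition Hk :: "nat \<Rightarrow> (nat \<Rightarrow> int) \<Rightarrow> nat \<Rightarrow> real" where
  "Hk N idx k = eps N * real_of_int (idx (Suc k) - idx k)"

definition Hmax :: "nat \<Rightarrow> nat \<Rightarrow> (nat \<Rightarrow> int) \<Rightarrow> real" where
  "Hmax N K idx = Max (Hk N idx ` {1..K})"

definition affine_on :: "(int \<Rightarrow> real) \<Rightarrow> int set \<Rightarrow> bool" where
  "affine_on v A \<longleftrightarrow> (\<exists>a b. \<forall>i\<in>A. v i = a + b * real_of_int i)"

definition UHper :: "nat \<Rightarrow> nat \<Rightarrow> (nat \<Rightarrow> int) \<Rightarrow> (int \<Rightarrow> real) set" where
  "UHper N K idx = {v. per N v \<and> (\<forall>k\<in>{1..K}. affine_on v {idx k..idx (Suc k)})}"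

definition UHzero :: "nat \<Rightarrow> nat \<Rightarrow> (nat \<Rightarrow> int) \<Rightarrow> (int \<Rightarrow> real) set" where
  "UHzero N K idx = UHper N K idx \<inter> Uzero N"

definition Upzero :: "nat \<Rightarrow> (int \<Rightarrow> real) set" where
  "Upzero p = {w. per p w \<and> (\<Sum>i\<in>{1..int p}. w i) = 0}"

text \<open>Sampling domains S_k^rep = {rep k ..< rep k + p} within S_k and collocation
 indices coll k in S_k^rep.\<close>
definition sampling :: "nat \<Rightarrow> nat \<Rightarrow> (nat \<Rightarrow> int) \<Rightarrow> (nat \<Rightarrow> int) \<Rightarrow> (nat \<Rightarrow> int) \<Rightarrow> bool" where
  "sampling p K idx rep coll \<longleftrightarrow> (\<forall>k\<in>{1..K}. idx k \<le> rep k \<and> rep k + int p \<le> idx (Suc k)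
      \<and> rep k \<le> coll k \<and> coll k < rep k + int p)"

definition ipRep :: "nat \<Rightarrow> int \<Rightarrow> (int \<Rightarrow> real) \<Rightarrow> (int \<Rightarrow> real) \<Rightarrow> real" where
  "ipRep p r a b = (1 / real p) * (\<Sum>i\<in>{r..<r + int p}. a i * b i)"

text \<open>psi^eps_{coll,k}(X_i) = psi(X_{coll k}, X_i/eps) = psi(X_{coll k}, Y_i).\<close>
definition psicoll :: "(int \<Rightarrow> int \<Rightarrow> real) \<Rightarrow> int \<Rightarrow> int \<Rightarrow> real" where
  "psicoll psi c = (\<lambda>i. psi c i)"

text \<open>r is the reconstruction R_k(v): r = l + w with l affine on all of eps*Z,
 agreeing with v on the element, and w in U^p_# solving the cell problem.\<close>
definition cell_ok :: "nat \<Rightarrow> nat \<Rightarrow> (int \<Rightarrow> int \<Rightarrow> real) \<Rightarrow> (nat \<Rightarrow> int) \<Rightarrow> (nat \<Rightarrow> int)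
    \<Rightarrow> (nat \<Rightarrow> int) \<Rightarrow> nat \<Rightarrow> (int \<Rightarrow> real) \<Rightarrow> (int \<Rightarrow> real) \<Rightarrow> bool" where
  "cell_ok N p psi idx rep coll k v r \<longleftrightarrow>
     (\<exists>l w. affine_on l UNIV \<and> (\<forall>i\<in>{idx k..idx (Suc k)}. l i = v i) \<and> w \<in> Upzero p
        \<and> r = (\<lambda>i. l i + w i)
        \<and> (\<forall>s\<in>Upzero p. ipRep p (rep k) (\<lambda>i. psicoll psi (coll k) i * Dd N r i) (Dd N s) = 0))"

definition Rk :: "nat \<Rightarrow> nat \<Rightarrow> (int \<Rightarrow> int \<Rightarrow> real) \<Rightarrow> (nat \<Rightarrow> int) \<Rightarrow> (nat \<Rightarrow> int)
    \<Rightarrow> (nat \<Rightarrow> int) \<Rightarrow> nat \<Rightarrow> (int \<Rightarrow> real) \<Rightarrow> (int \<Rightarrow> real)" where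
  "Rk N p psi idx rep coll k v = (THE r. cell_ok N p psi idx rep coll k v r)"

definition HQC_sol :: "nat \<Rightarrow> nat \<Rightarrow> (int \<Rightarrow> int \<Rightarrow> real) \<Rightarrow> (int \<Rightarrow> real) \<Rightarrow> nat \<Rightarrow> (nat \<Rightarrow> int)
    \<Rightarrow> (nat \<Rightarrow> int) \<Rightarrow> (nat \<Rightarrow> int) \<Rightarrow> (int \<Rightarrow> real) \<Rightarrow> bool" where
  "HQC_sol N p psi f K idx rep coll u \<longleftrightarrow> u \<in> UHzero N K idx \<and>
     (\<forall>v\<in>UHzero N K idx.
        (\<Sum>k=1..K. Hk N idx k * ipRep p (rep k)
            (\<lambda>i. psicoll psi (coll k) i * Dd N (Rk N p psi idx rep coll k u) i)
            (Dd N (Rk N p psi idx rep coll k v))) = ipX N f v)"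

definition hom_sol :: "nat \<Rightarrow> nat \<Rightarrow> (int \<Rightarrow> int \<Rightarrow> real) \<Rightarrow> (int \<Rightarrow> real) \<Rightarrow> nat \<Rightarrow> (nat \<Rightarrow> int)
    \<Rightarrow> (int \<Rightarrow> real) \<Rightarrow> bool" where
  "hom_sol N p psi f K idx u \<longleftrightarrow> u \<in> UHzero N K idx \<and>
     (\<forall>v\<in>UHzero N K idx. ipX N (\<lambda>i. psi0 p psi i * Dd N u i) (Dd N v) = ipX N f v)"

definition standing :: "nat \<Rightarrow> nat \<Rightarrow> (int \<Rightarrow> int \<Rightarrow> real) \<Rightarrow> real \<Rightarrow> real \<Rightarrow> real
    \<Rightarrow> (int \<Rightarrow> real) \<Rightarrow> nat \<Rightarrow> (nat \<Rightarrow> int) \<Rightarrow> (nat \<Rightarrow> int) \<Rightarrow> (nat \<Rightarrow> int) \<Rightarrow> bool" where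
  "standing N p psi c C C' f K idx rep coll \<longleftrightarrow>
     1 \<le> N \<and> 1 \<le> p \<and> twoscale N p psi \<and> A1 N p psi c C \<and> A2 N p psi C'
     \<and> per N f \<and> avgX N f = 0 \<and> mesh N K idx \<and> sampling p K idx rep coll"

end

theory Submission
  imports Defs "HOL-Analysis.Convex"
begin



lemma eps_pos: "1 \<le> N \<Longrightarrow> eps N > 0" by (simp add: eps_def)

lemma per_shift:
  assumes "per n g" shows "g (i + int n * t) = g i"
proof (induction t rule: int_induct[where k=0])
  case base then show ?case by simp
next
  case (step1 t)
  have "g (i + int n * (t+1)) = g ((i + int n * t) + int n)" by (simp add: algebra_simps)
  also have "\<dots> = g (i + int n * t)" using assms by (simp add: per_def)
  finally show ?case using step1 by simp
next
  case (step2 t)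
  have "g (i + int n * t) = g ((i + int n * (t - 1)) + int n)" by (simp add: algebra_simps)
  also have "\<dots> = g (i + int n * (t-1))" using assms by (simp add: per_def)
  finally show ?case using step2 by simp
qed

lemma per_mod:
  assumes "per n g" "1 \<le> n"
  shows "g i = g (((i - 1) mod int n) + 1)" and "((i - 1) mod int n) + 1 \<in> {1..int n}"
proof -
  have "i = (((i - 1) mod int n) + 1) + int n * ((i-1) div int n)"
    using mult_div_mod_eq[of "int n" "i - 1"] by linarith
  then show "g i = g (((i - 1) mod int n) + 1)" using per_shift[OF assms(1)] by metis
  show "((i - 1) mod int n) + 1 \<in> {1..int n}"
  proof -
    have n0: "0 < int n" using assms(2) by simp
    have "(i-1) mod int n < int n" using pos_mod_bound[OF n0] .
    moreover have "0 \<le> (i-1) mod int n" using pos_mod_sign[OF n0] .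
    ultimately show ?thesis by simp
  qed
qed

lemma per_global:
  assumes "per n g" "1 \<le> n" "\<forall>i\<in>{1..int n}. P (g i)"
  shows "P (g i)"
  using per_mod[OF assms(1,2), of i] assms(3) by metis

lemma sum_window:
  "(\<Sum>i\<in>{r..<r + int p}. F i) = (\<Sum>m<p. F (r + int m))"
proof -
  have "{r..<r + int p} = (\<lambda>m. r + int m) ` {..<p}"
  proof
    show "{r..<r + int p} \<subseteq> (\<lambda>m. r + int m) ` {..<p}"
    proof
      fix x assume "x \<in> {r..<r + int p}"
      then have "x = r + int (nat (x - r))" "nat (x - r) < p" by auto
      then show "x \<in> (\<lambda>m. r + int m) ` {..<p}" by blast
    qed
  qed auto
  moreover have "inj_on (\<lambda>m. r + int m) {..<p}" by (auto simp: inj_on_def)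
  ultimately show ?thesis by (simp add: sum.reindex)
qed

lemma sum_1N: "(\<Sum>i\<in>{1..int N}. F i) = (\<Sum>i\<in>{1..<1 + int N}. F i)"
  by (rule sum.cong) auto

lemma per_sum_shift:
  assumes "per p g"
  shows "(\<Sum>i\<in>{r..<r + int p}. g i) = (\<Sum>i\<in>{1..int p}. g i)"
proof -
  have key: "(\<Sum>m<p. g (r + int m)) = (\<Sum>m<p. g (0 + int m))" for r
  proof (induction r rule: int_induct[where k=0])
    case base then show ?case by simp
  next
    case (step1 r)
    have "(\<Sum>m<p. g (r + 1 + int m)) = (\<Sum>m<p. g (r + int (Suc m)))" by (simp add: algebra_simps)
    also have "\<dots> = (\<Sum>m<Suc p. g (r + int m)) - g r" by (subst sum.lessThan_Suc_shift) simp
    also have "\<dots> = (\<Sum>m<p. g (r + int m)) + g (r + int p) - g r" by simp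
    also have "g (r + int p) = g r" using assms by (simp add: per_def)
    finally show ?case using step1 by simp
  next
    case (step2 r)
    have "(\<Sum>m<p. g (r + int m)) = (\<Sum>m<p. g (r - 1 + int (Suc m)))" by (simp add: algebra_simps)
    also have "\<dots> = (\<Sum>m<Suc p. g (r - 1 + int m)) - g (r - 1)" by (subst sum.lessThan_Suc_shift) simp
    also have "\<dots> = (\<Sum>m<p. g (r - 1 + int m)) + g (r - 1 + int p) - g (r - 1)" by simp
    also have "g (r - 1 + int p) = g (r - 1)" using assms by (simp add: per_def)
    finally show ?case using step2 by simp
  qed
  show ?thesis using key[of r] key[of 1] sum_window[of g r p] sum_window[of g 1 p] sum_1N[of g p]
    by simp
qed

lemma telescope_window:
  "(\<Sum>i\<in>{r..<r + int p}. (s::int\<Rightarrow>real) (i+1) - s i) = s (r + int p) - s r"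
proof -
  have "(\<Sum>m<p. s (r + int m + 1) - s (r + int m)) = s (r + int p) - s r"
    using sum_lessThan_telescope[of "\<lambda>m. s (r + int m)" p] by (simp add: algebra_simps)
  then show ?thesis by (simp add: sum_window)
qed



lemma tele_F:
  fixes F h :: "real \<Rightarrow> real"
  assumes "\<And>x. F (x + 1) - F x = h x"
  shows "a \<le> b \<Longrightarrow> (\<Sum>k\<in>{a..<b::nat}. h (real k)) = F (real b) - F (real a)"
proof (induction b)
  case 0 then show ?case by simp
next
  case (Suc b)
  show ?case
  proof (cases "a \<le> b")
    case True
    have "(\<Sum>k\<in>{a..<Suc b}. h (real k)) = (\<Sum>k\<in>{a..<b}. h (real k)) + h (real b)"
      using True by simp
    also have "\<dots> = F (real b) - F (real a) + (F (real b + 1) - F (real b))"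
      using Suc.IH True assms by simp
    finally show ?thesis by (simp add: add.commute)
  next
    case False
    then have "a = Suc b" using Suc.prems by simp
    then show ?thesis by simp
  qed
qed

lemma sq_sum_ap:
  fixes al be :: real
  assumes "a \<le> b"
  shows "(\<Sum>k\<in>{a..<b::nat}. (al * real k + be)\<^sup>2) =
     (al\<^sup>2 * (2 * real b ^ 3 - 3 * real b ^ 2 + real b) / 6 + al * be * (real b ^ 2 - real b) + be\<^sup>2 * real b)
   - (al\<^sup>2 * (2 * real a ^ 3 - 3 * real a ^ 2 + real a) / 6 + al * be * (real a ^ 2 - real a) + be\<^sup>2 * real a)"
proof -
  let ?F = "\<lambda>x::real. al\<^sup>2 * (2 * x ^ 3 - 3 * x ^ 2 + x) / 6 + al * be * (x ^ 2 - x) + be\<^sup>2 * x"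
  have "?F (x + 1) - ?F x = (al * x + be)\<^sup>2" for x
    by (simp add: power2_eq_square power3_eq_cube field_simps)
  from tele_F[of ?F "\<lambda>x. (al * x + be)\<^sup>2", OF this assms] show ?thesis by simp
qed

lemma phi_sum:
  assumes N: "1 \<le> N" and n: "1 \<le> n" "n \<le> N"
  shows "(\<Sum>k=1..N. ((if k < n then 1 else 0) - (real N - real k) / real N
           - (2 * real n - real N - 1) / (2 * real N))\<^sup>2) = (real N ^ 2 - 1) / (12 * real N)"
proof -
  have NN: "real N > 0" using N by simp
  have split: "{1..N} = {1..<n} \<union> {n..<Suc N}" using n by auto
  have "(\<Sum>k=1..N. ((if k < n then 1 else 0) - (real N - real k) / real N
           - (2 * real n - real N - 1) / (2 * real N))\<^sup>2)
     = (\<Sum>k\<in>{1..<n}. ((1/real N) * real k + (real N + 1 - 2 * real n)/(2 * real N))\<^sup>2)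
     + (\<Sum>k\<in>{n..<Suc N}. ((1/real N) * real k + (1 - real N - 2 * real n)/(2 * real N))\<^sup>2)"
    unfolding split
    apply (subst sum.union_disjoint) apply auto[3]
    apply (rule arg_cong2[where f="(+)"])
     apply (rule sum.cong, simp, rule arg_cong[where f="\<lambda>x. x^2"]) using NN apply (simp add: field_simps)
    apply (rule sum.cong, simp, rule arg_cong[where f="\<lambda>x. x^2"]) using NN apply (simp add: field_simps)
    done
  also have "\<dots> = (real N ^ 2 - 1) / (12 * real N)"
    using n NN
    apply (subst sq_sum_ap, simp)+
    by (simp add: field_simps power2_eq_square power3_eq_cube)
  finally show ?thesis .
qed

lemma tri_swap:
  "(\<Sum>n=1..M. \<Sum>k\<in>{1..<n}. (d k::real)) = (\<Sum>k=1..M. d k * (real M - real k))"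
proof (induction M)
  case 0 then show ?case by simp
next
  case (Suc M)
  have "(\<Sum>n=1..Suc M. \<Sum>k\<in>{1..<n}. d k) = (\<Sum>k=1..M. d k * (real M - real k)) + (\<Sum>k\<in>{1..<Suc M}. d k)"
    using Suc.IH by simp
  also have "(\<Sum>k\<in>{1..<Suc M}. d k) = (\<Sum>k=1..M. d k)"
    by (rule sum.cong) auto
  also have "(\<Sum>k=1..M. d k * (real M - real k)) + (\<Sum>k=1..M. d k) = (\<Sum>k=1..M. d k * (real (Suc M) - real k))"
    by (simp add: sum.distrib[symmetric] algebra_simps)
  also have "\<dots> = (\<Sum>k=1..Suc M. d k * (real (Suc M) - real k))" by simp
  finally show ?case .
qed

lemma poinc_nat:
  fixes U :: "nat \<Rightarrow> real"
  assumes N: "1 \<le> N" and per: "U (Suc N) = U 1" and mean: "(\<Sum>n=1..N. U n) = 0"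
  shows "(\<Sum>n=1..N. (U n)\<^sup>2) \<le> real N ^ 2 / 12 * (\<Sum>k=1..N. (U (Suc k) - U k)\<^sup>2)"
proof -
  define d where "d k = U (Suc k) - U k" for k
  define S where "S = (\<Sum>k=1..N. (d k)\<^sup>2)"
  have NN: "real N > 0" using N by simp
  have tel: "U n = U 1 + (\<Sum>k\<in>{1..<n}. d k)" if "1 \<le> n" for n
    using that
  proof (induction n)
    case 0 then show ?case by simp
  next
    case (Suc n)
    show ?case
    proof (cases "n = 0")
      case True then show ?thesis by simp
    next
      case False
      then have "U n = U 1 + (\<Sum>k\<in>{1..<n}. d k)" using Suc.IH by simp
      then show ?thesis using False by (simp add: d_def)
    qed
  qed
  have dsum: "(\<Sum>k=1..N. d k) = 0"
  proof -
    have "U (Suc N) = U 1 + (\<Sum>k\<in>{1..<Suc N}. d k)" using tel[of "Suc N"] by simp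
    moreover have "(\<Sum>k\<in>{1..<Suc N}. d k) = (\<Sum>k=1..N. d k)" by (rule sum.cong) auto
    ultimately show ?thesis using per by simp
  qed
  have "(\<Sum>n=1..N. U 1 + (\<Sum>k\<in>{1..<n}. d k)) = (\<Sum>n=1..N. U n)"
    by (rule sum.cong[OF refl], rule tel[symmetric]) auto
  then have "0 = (\<Sum>n=1..N. U 1 + (\<Sum>k\<in>{1..<n}. d k))" using mean by simp
  also have "\<dots> = real N * U 1 + (\<Sum>k=1..N. d k * (real N - real k))"
    using tri_swap[of d N] by (simp add: sum.distrib)
  finally have U1: "U 1 = - (\<Sum>k=1..N. d k * (real N - real k)) / real N"
    using NN by (simp add: field_simps)
  define phi where "phi n k = (if k < n then 1 else 0) - (real N - real k) / real N
           - (2 * real n - real N - 1) / (2 * real N)" for n k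
  have rep: "U n = (\<Sum>k=1..N. d k * phi n k)" if n: "1 \<le> n" "n \<le> N" for n
  proof -
    have "(\<Sum>k=1..N. d k * phi n k) = (\<Sum>k=1..N. d k * (if k < n then 1 else 0))
        - (\<Sum>k=1..N. d k * (real N - real k)) / real N
        - (\<Sum>k=1..N. d k) * ((2 * real n - real N - 1) / (2 * real N))"
    proof -
      have "(\<Sum>k=1..N. d k * phi n k) = (\<Sum>k=1..N. d k * (if k<n then 1 else 0) - d k * (real N - real k) / real N - d k * ((2*real n - real N - 1)/(2*real N)))"
        by (rule sum.cong) (simp_all add: phi_def right_diff_distrib)
      then show ?thesis by (simp add: sum_subtractf sum_divide_distrib sum_distrib_right)
    qed
    also have "(\<Sum>k=1..N. d k * (if k < n then 1 else 0)) = (\<Sum>k\<in>{1..<n}. d k)"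
    proof -
      have "(\<Sum>k=1..N. d k * (if k < n then 1 else 0)) = (\<Sum>k=1..N. if k < n then d k else 0)"
        by (rule sum.cong) auto
      also have "\<dots> = sum d {k\<in>{1..N}. k < n}" by (rule sum.inter_filter[symmetric]) simp
      also have "{k\<in>{1..N}. k < n} = {1..<n}" using n by auto
      finally show ?thesis .
    qed
    finally show ?thesis using tel[OF n(1)] U1 dsum by (simp del: sum.cl_ivl_Suc)
  qed
  have bound: "(U n)\<^sup>2 \<le> S * ((real N ^ 2 - 1) / (12 * real N))" if n: "1 \<le> n" "n \<le> N" for n
  proof -
    have "(U n)\<^sup>2 \<le> (\<Sum>k=1..N. (d k)\<^sup>2) * (\<Sum>k=1..N. (phi n k)\<^sup>2)"
      unfolding rep[OF n] by (rule Cauchy_Schwarz_ineq_sum)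
    also have "(\<Sum>k=1..N. (phi n k)\<^sup>2) = (real N ^ 2 - 1) / (12 * real N)"
      unfolding phi_def using phi_sum[OF N n] .
    finally show ?thesis unfolding S_def .
  qed
  have "(\<Sum>n=1..N. (U n)\<^sup>2) \<le> (\<Sum>n=1..N. S * ((real N ^ 2 - 1) / (12 * real N)))"
    by (rule sum_mono) (use bound in auto)
  also have "\<dots> = S * (real N ^ 2 - 1) / 12" using NN by simp
  also have "\<dots> \<le> real N ^ 2 / 12 * S"
  proof -
    have "S \<ge> 0" unfolding S_def by (simp add: sum_nonneg)
    then show ?thesis by (simp add: field_simps)
  qed
  finally show ?thesis unfolding S_def d_def .
qed


lemma sum_int_nat: "(\<Sum>i\<in>{1..int N}. F i) = (\<Sum>n=1..N. F (int n))"
proof -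
  have "{1..int N} = int ` {1..N}" by (simp add: image_int_atLeastAtMost)
  then show ?thesis by (simp add: sum.reindex)
qed

lemma poincare:
  assumes N: "1 \<le> N" and u: "u \<in> Uzero N"
  shows "L2 N u \<le> 1 / (2 * sqrt 3) * H1 N u"
proof -
  define U where "U n = u (int n)" for n
  have per: "per N u" and av: "avgX N u = 0" using u by (auto simp: Uzero_def)
  have NN: "real N > 0" using N by simp
  have perU: "U (Suc N) = U 1" using per unfolding U_def per_def
    by (metis add.commute of_nat_1 of_nat_Suc)
  have meanU: "(\<Sum>n=1..N. U n) = 0" using av NN unfolding avgX_def U_def sum_int_nat by simp
  note PN = poinc_nat[OF N perU meanU]
  have L2e: "L2 N u = sqrt ((\<Sum>n=1..N. (U n)\<^sup>2) / real N)"
    unfolding L2_def ipX_def sum_int_nat U_def by (simp add: power2_eq_square)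
  have H1e: "H1 N u = sqrt (real N * (\<Sum>k=1..N. (U (Suc k) - U k)\<^sup>2))"
  proof -
    have "H1 N u = sqrt ((1 / real N) * (\<Sum>n=1..N. (real N * (U (Suc n) - U n))\<^sup>2))"
      unfolding H1_def L2_def ipX_def sum_int_nat U_def Dd_def eps_def
      by (simp add: power2_eq_square add.commute mult.commute mult.left_commute)
    also have "(\<Sum>n=1..N. (real N * (U (Suc n) - U n))\<^sup>2) = real N ^ 2 * (\<Sum>n=1..N. (U (Suc n) - U n)\<^sup>2)"
      by (simp add: power_mult_distrib sum_distrib_left)
    finally show ?thesis using NN by (simp add: power2_eq_square)
  qed
  have "(\<Sum>n=1..N. (U n)\<^sup>2) / real N \<le> real N * (\<Sum>k=1..N. (U (Suc k) - U k)\<^sup>2) / 12"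
    using PN NN by (simp add: field_simps power2_eq_square)
  then have "L2 N u \<le> sqrt (real N * (\<Sum>k=1..N. (U (Suc k) - U k)\<^sup>2) / 12)"
    unfolding L2e by (rule real_sqrt_le_mono)
  also have "\<dots> = sqrt (real N * (\<Sum>k=1..N. (U (Suc k) - U k)\<^sup>2)) / sqrt 12"
    by (simp add: real_sqrt_divide)
  also have "sqrt 12 = 2 * sqrt 3"
    using real_sqrt_mult[of 4 3] by simp
  finally show ?thesis unfolding H1e by simp
qed



lemma ipX_cs: "ipX N f w \<le> L2 N f * L2 N w"
proof -
  have "(\<Sum>i\<in>{1..int N}. f i * w i) \<le> \<bar>\<Sum>i\<in>{1..int N}. f i * w i\<bar>" by simp
  also have "\<dots> = sqrt ((\<Sum>i\<in>{1..int N}. f i * w i)\<^sup>2)" by simp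
  also have "\<dots> \<le> sqrt ((\<Sum>i\<in>{1..int N}. (f i)\<^sup>2) * (\<Sum>i\<in>{1..int N}. (w i)\<^sup>2))"
    by (rule real_sqrt_le_mono, rule Cauchy_Schwarz_ineq_sum)
  finally have *: "(\<Sum>i\<in>{1..int N}. f i * w i) \<le> sqrt (\<Sum>i\<in>{1..int N}. (f i)\<^sup>2) * sqrt (\<Sum>i\<in>{1..int N}. (w i)\<^sup>2)"
    by (simp add: real_sqrt_mult)
  have "L2 N f * L2 N w = (1 / real N) * (sqrt (\<Sum>i\<in>{1..int N}. (f i)\<^sup>2) * sqrt (\<Sum>i\<in>{1..int N}. (w i)\<^sup>2))"
    unfolding L2_def ipX_def
    by (simp add: real_sqrt_mult real_sqrt_divide power2_eq_square)
  with * show ?thesis unfolding ipX_def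
    by (simp add: divide_right_mono)
qed

lemma L2_zero:
  assumes N: "1 \<le> N" and u: "per N u" and z: "L2 N u = 0"
  shows "u = (\<lambda>_. 0)"
proof -
  have NN: "real N > 0" using N by simp
  have "ipX N u u = 0" using z unfolding L2_def by simp
  then have s: "(\<Sum>i\<in>{1..int N}. (u i)\<^sup>2) = 0" using NN unfolding ipX_def by (simp add: power2_eq_square)
  have "\<forall>i\<in>{1..int N}. u i = 0"
  proof
    fix i assume "i \<in> {1..int N}"
    then have "(u i)\<^sup>2 = 0" using s sum_nonneg_eq_0_iff[of "{1..int N}" "\<lambda>i. (u i)\<^sup>2"] by simp
    then show "u i = 0" by simp
  qed
  then show ?thesis using per_global[OF u N, where P="\<lambda>x. x = 0"] by auto
qed

lemma H1_zero:
  assumes N: "1 \<le> N" and u: "u \<in> Uzero N" and z: "H1 N u = 0"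
  shows "u = (\<lambda>_. 0)"
proof -
  have "L2 N u \<le> 0" using poincare[OF N u] z by simp
  moreover have "L2 N u \<ge> 0" unfolding L2_def ipX_def using N
    by (simp add: sum_nonneg)
  ultimately show ?thesis using L2_zero[OF N _ ] u by (auto simp: Uzero_def)
qed

lemma H1_nonneg: "H1 N u \<ge> 0"
  unfolding H1_def L2_def ipX_def by (simp add: sum_nonneg)

lemma L2_nonneg: "L2 N u \<ge> 0"
  unfolding L2_def ipX_def by (simp add: sum_nonneg)

lemma Hm1_bound:
  assumes N: "1 \<le> N" and v: "v \<in> Uzero N"
  shows "ipX N f v \<le> Hm1 N f * H1 N v" and "Hm1 N f \<ge> 0"
proof -
  let ?A = "insert 0 {ipX N f w / H1 N w | w. w \<in> Uzero N \<and> w \<noteq> (\<lambda>_. 0)}"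
  have bdd: "bdd_above ?A"
  proof (rule bdd_aboveI[where M="L2 N f / (2 * sqrt 3)"])
    fix x assume "x \<in> ?A"
    then show "x \<le> L2 N f / (2 * sqrt 3)"
    proof
      assume "x = 0" then show ?thesis using L2_nonneg[of N f] by simp
    next
      assume "x \<in> {ipX N f w / H1 N w | w. w \<in> Uzero N \<and> w \<noteq> (\<lambda>_. 0)}"
      then obtain w where w: "w \<in> Uzero N" "w \<noteq> (\<lambda>_. 0)" and x: "x = ipX N f w / H1 N w" by blast
      have hp: "H1 N w > 0" using H1_zero[OF N w(1)] w(2) H1_nonneg[of N w] by force
      have "ipX N f w \<le> L2 N f * L2 N w" by (rule ipX_cs)
      also have "\<dots> \<le> L2 N f * (1 / (2 * sqrt 3) * H1 N w)"
        by (rule mult_left_mono[OF poincare[OF N w(1)] L2_nonneg])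
      finally have "ipX N f w \<le> L2 N f / (2 * sqrt 3) * H1 N w" by simp
      then show ?thesis unfolding x using hp by (simp add: pos_divide_le_eq)
    qed
  qed
  show "Hm1 N f \<ge> 0" unfolding Hm1_def by (rule cSup_upper[OF _ bdd]) simp
  show "ipX N f v \<le> Hm1 N f * H1 N v"
  proof (cases "v = (\<lambda>_. 0)")
    case True
    then show ?thesis by (simp add: ipX_def H1_def L2_def Dd_def)
  next
    case False
    have hp: "H1 N v > 0" using H1_zero[OF N v] False H1_nonneg[of N v] by force
    have "ipX N f v / H1 N v \<in> ?A" using v False by blast
    then have "ipX N f v / H1 N v \<le> Hm1 N f" unfolding Hm1_def by (rule cSup_upper[OF _ bdd])
    then show ?thesis using hp by (simp add: pos_divide_le_eq)
  qed
qed



lemma mono_chain: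
  fixes f :: "nat \<Rightarrow> int"
  assumes "\<forall>k\<in>{a..<b}. f k \<le> f (Suc k)" "a \<le> i" "i \<le> j" "j \<le> b"
  shows "f i \<le> f j"
  using assms(3,4)
proof (induction j)
  case 0 then show ?case by simp
next
  case (Suc j)
  show ?case
  proof (cases "i = Suc j")
    case True then show ?thesis by simp
  next
    case False
    then have "f i \<le> f j" using Suc by simp
    moreover have "f j \<le> f (Suc j)" using assms(1) assms(2) Suc.prems False by auto
    ultimately show ?thesis by simp
  qed
qed

lemma mesh_step:
  assumes "mesh N K idx" "k \<in> {1..K}"
  shows "idx k < idx (Suc k)"
  using assms unfolding mesh_def by (cases "k < K") auto

lemma mesh_range:
  assumes m: "mesh N K idx" and k: "k \<in> {1..K}"
  shows "1 \<le> idx k" "idx (Suc k) \<le> int N + 1"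
proof -
  have st: "\<forall>k\<in>{1..<Suc K}. idx k \<le> idx (Suc k)" using mesh_step[OF m] by fastforce
  have "idx 1 \<le> idx k" by (rule mono_chain[OF st]) (use k in auto)
  then show "1 \<le> idx k" using m by (simp add: mesh_def)
  have "idx (Suc k) \<le> idx (Suc K)" by (rule mono_chain[OF st]) (use k in auto)
  then show "idx (Suc k) \<le> int N + 1" using m by (simp add: mesh_def)
qed

lemma sum_int_concat:
  fixes a b c :: int
  assumes "a \<le> b" "b \<le> c"
  shows "(\<Sum>i\<in>{a..<c}. F i) = (\<Sum>i\<in>{a..<b}. F i) + (\<Sum>i\<in>{b..<c}. F i)"
proof -
  have "{a..<c} = {a..<b} \<union> {b..<c}" using assms by auto
  then show ?thesis by (simp add: sum.union_disjoint[symmetric] ivl_disj_int)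
qed

lemma sum_split_mesh:
  fixes idx :: "nat \<Rightarrow> int"
  assumes "\<forall>k\<in>{1..K}. idx k \<le> idx (Suc k)"
  shows "(\<Sum>i\<in>{idx 1..<idx (Suc K)}. F i) = (\<Sum>k=1..K. \<Sum>i\<in>{idx k..<idx (Suc k)}. F i)"
  using assms
proof (induction K)
  case 0 then show ?case by simp
next
  case (Suc K)
  have st: "\<forall>k\<in>{1..<Suc K}. idx k \<le> idx (Suc k)" using Suc.prems by auto
  have le: "idx 1 \<le> idx (Suc K)" by (cases K) (auto intro: mono_chain[OF st])
  have "(\<Sum>i\<in>{idx 1..<idx (Suc (Suc K))}. F i) = (\<Sum>i\<in>{idx 1..<idx (Suc K)}. F i) + (\<Sum>i\<in>{idx (Suc K)..<idx (Suc (Suc K))}. F i)"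
    by (rule sum_int_concat[OF le]) (use Suc.prems in auto)
  also have "(\<Sum>i\<in>{idx 1..<idx (Suc K)}. F i) = (\<Sum>k=1..K. \<Sum>i\<in>{idx k..<idx (Suc k)}. F i)"
    using Suc.IH Suc.prems by auto
  finally show ?case by simp
qed

lemma slope_const:
  assumes v: "v \<in> UHper N K idx" and m: "mesh N K idx" and k: "k \<in> {1..K}"
    and i: "i \<in> {idx k..<idx (Suc k)}"
  shows "Dd N v i = Dd N v (idx k)"
proof -
  obtain a b where ab: "\<forall>j\<in>{idx k..idx (Suc k)}. v j = a + b * real_of_int j"
    using v k unfolding UHper_def affine_on_def by blast
  have lt: "idx k < idx (Suc k)" by (rule mesh_step[OF m k])
  have "v (i+1) - v i = b" using ab i by (auto simp: algebra_simps)
  moreover have "v (idx k + 1) - v (idx k) = b" using ab lt by (auto simp: algebra_simps)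
  ultimately show ?thesis by (simp add: Dd_def)
qed

lemma bilinear:
  assumes m: "mesh N K idx" and u: "u \<in> UHper N K idx" and v: "v \<in> UHper N K idx"
  shows "ipX N (\<lambda>i. w i * Dd N u i) (Dd N v) =
     (\<Sum>k=1..K. Dd N u (idx k) * Dd N v (idx k) * ((1 / real N) * (\<Sum>i\<in>{idx k..<idx (Suc k)}. w i)))"
proof -
  have st: "\<forall>k\<in>{1..K}. idx k \<le> idx (Suc k)" using mesh_step[OF m] by fastforce
  have "{1..int N} = {idx 1..<idx (Suc K)}" using m by (auto simp: mesh_def)
  then have "ipX N (\<lambda>i. w i * Dd N u i) (Dd N v) = (1 / real N) *
      (\<Sum>k=1..K. \<Sum>i\<in>{idx k..<idx (Suc k)}. w i * Dd N u i * Dd N v i)"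
    unfolding ipX_def using sum_split_mesh[OF st, of "\<lambda>i. w i * Dd N u i * Dd N v i"] by simp
  also have "\<dots> = (1 / real N) * (\<Sum>k=1..K. Dd N u (idx k) * Dd N v (idx k) * (\<Sum>i\<in>{idx k..<idx (Suc k)}. w i))"
  proof -
    have "(\<Sum>i\<in>{idx k..<idx (Suc k)}. w i * Dd N u i * Dd N v i) = Dd N u (idx k) * Dd N v (idx k) * (\<Sum>i\<in>{idx k..<idx (Suc k)}. w i)"
      if k: "k \<in> {1..K}" for k
    proof -
      have "(\<Sum>i\<in>{idx k..<idx (Suc k)}. w i * Dd N u i * Dd N v i) = (\<Sum>i\<in>{idx k..<idx (Suc k)}. Dd N u (idx k) * Dd N v (idx k) * w i)"
        by (rule sum.cong[OF refl]) (simp only: slope_const[OF u m k] slope_const[OF v m k] ac_simps)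
      then show ?thesis by (simp add: sum_distrib_left)
    qed
    then show ?thesis by simp
  qed
  also have "\<dots> = (\<Sum>k=1..K. Dd N u (idx k) * Dd N v (idx k) * ((1 / real N) * (\<Sum>i\<in>{idx k..<idx (Suc k)}. w i)))"
    unfolding sum_distrib_left by (rule sum.cong[OF refl]) (simp only: ac_simps)
  finally show ?thesis .
qed



lemma per_antideriv:
  assumes p: "1 \<le> p" and dp: "per p d" and ds: "(\<Sum>i\<in>{1..int p}. d i) = 0"
  shows "\<exists>w. per p w \<and> (\<forall>i. w (i+1) - w i = d i)"
proof -
  define w where "w i = (\<Sum>j\<in>{1..(i - 1) mod int p}. d j)" for i
  have pp: "0 < int p" using p by simp
  have "per p w" unfolding per_def w_def
  proof
    fix i
    have "(i + int p - 1) mod int p = (i - 1) mod int p"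
      using mod_add_self2[of "i - 1" "int p"] by (simp add: algebra_simps)
    then show "sum d {1..(i + int p - 1) mod int p} = sum d {1..(i - 1) mod int p}" by simp
  qed
  moreover have "w (i+1) - w i = d i" for i
  proof -
    define m where "m = (i - 1) mod int p"
    have m0: "0 \<le> m" and mp: "m < int p" unfolding m_def using pp by simp_all
    have di: "d i = d (m + 1)" using per_mod(1)[OF dp p, of i] unfolding m_def .
    have m1: "(i + 1 - 1) mod int p = (m + 1) mod int p"
      unfolding m_def by (simp add: mod_add_left_eq)
    show ?thesis
    proof (cases "m + 1 < int p")
      case True
      then have "(i + 1 - 1) mod int p = m + 1" using m1 m0 by simp
      then have "w (i+1) = (\<Sum>j\<in>{1..m+1}. d j)" unfolding w_def by simp
      also have "\<dots> = (\<Sum>j\<in>{1..m}. d j) + d (m+1)"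
      proof -
        have "{1..m+1} = insert (m+1) {1..m}" using m0 by auto
        then show ?thesis by simp
      qed
      finally show ?thesis unfolding w_def using di m_def by simp
    next
      case False
      then have mm: "m = int p - 1" using mp by simp
      then have "(i + 1 - 1) mod int p = 0" using m1 by simp
      then have "w (i+1) = 0" unfolding w_def by simp
      moreover have "w i = - d (int p)"
      proof -
        have "{1..int p} = insert (int p) {1..int p - 1}" using pp by auto
        then have "(\<Sum>j\<in>{1..int p}. d j) = d (int p) + (\<Sum>j\<in>{1..int p - 1}. d j)" by simp
        then show ?thesis unfolding w_def m_def[symmetric] mm using ds by simp
      qed
      ultimately show ?thesis using di mm by simp
    qed
  qed
  ultimately show ?thesis by blast
qed

lemma per_antideriv0:
  assumes p: "1 \<le> p" and dp: "per p d" and ds: "(\<Sum>i\<in>{1..int p}. d i) = 0"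
  shows "\<exists>w. w \<in> Upzero p \<and> (\<forall>i. w (i+1) - w i = d i)"
proof -
  obtain w where w: "per p w" "\<forall>i. w (i+1) - w i = d i" using per_antideriv[OF assms] by blast
  define m where "m = (\<Sum>i\<in>{1..int p}. w i) / real p"
  define w' where "w' i = w i - m" for i
  have "per p w'" using w(1) unfolding per_def w'_def by simp
  moreover have "(\<Sum>i\<in>{1..int p}. w' i) = 0"
    unfolding w'_def m_def using p by (simp add: sum_subtractf)
  moreover have "\<forall>i. w' (i+1) - w' i = d i" using w(2) unfolding w'_def by simp
  ultimately show ?thesis unfolding Upzero_def by blast
qed



lemma per_const_window:
  assumes p: "1 \<le> p" and z: "per p z" and st: "\<forall>i\<in>{r..<r + int p}. z (i+1) = z i"
  shows "z i = z r"
proof -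
  have win: "z (r + int n) = z r" if "n \<le> p" for n
    using that
  proof (induction n)
    case 0 then show ?case by simp
  next
    case (Suc n)
    then have h: "z (r + int n + 1) = z (r + int n)" using st by simp
    have eq: "r + int (Suc n) = r + int n + 1" by simp
    have ih: "z (r + int n) = z r" using Suc by simp
    show ?case by (simp only: eq, rule trans[OF h ih])
  qed
  have pp: "0 < int p" using p by simp
  define m where "m = (i - r) mod int p"
  have m0: "0 \<le> m" "m < int p" unfolding m_def using pp by simp_all
  have "i = (r + m) + int p * ((i - r) div int p)"
    unfolding m_def using mult_div_mod_eq[of "int p" "i - r"] by linarith
  then have "z i = z (r + m)" using per_shift[OF z] by metis
  also have "\<dots> = z (r + int (nat m))" using m0 by simp
  also have "\<dots> = z r" by (rule win) (use m0 in linarith)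
  finally show ?thesis .
qed

lemma cell_unique:
  assumes N: "1 \<le> N" and p: "1 \<le> p"
    and pos: "\<forall>i j. 0 < psi i j"
    and lt: "idx k < idx (Suc k)"
    and c1: "cell_ok N p psi idx rep coll k v r1" and c2: "cell_ok N p psi idx rep coll k v r2"
  shows "r1 = r2"
proof -
  obtain l1 w1 where A: "affine_on l1 UNIV" "\<forall>i\<in>{idx k..idx (Suc k)}. l1 i = v i" "w1 \<in> Upzero p"
     "r1 = (\<lambda>i. l1 i + w1 i)"
     "\<forall>s\<in>Upzero p. ipRep p (rep k) (\<lambda>i. psicoll psi (coll k) i * Dd N r1 i) (Dd N s) = 0"
    using c1 unfolding cell_ok_def by blast
  obtain l2 w2 where B: "affine_on l2 UNIV" "\<forall>i\<in>{idx k..idx (Suc k)}. l2 i = v i" "w2 \<in> Upzero p"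
     "r2 = (\<lambda>i. l2 i + w2 i)"
     "\<forall>s\<in>Upzero p. ipRep p (rep k) (\<lambda>i. psicoll psi (coll k) i * Dd N r2 i) (Dd N s) = 0"
    using c2 unfolding cell_ok_def by blast
  obtain a1 b1 where l1: "\<forall>i. l1 i = a1 + b1 * real_of_int i" using A(1) unfolding affine_on_def by blast
  obtain a2 b2 where l2: "\<forall>i. l2 i = a2 + b2 * real_of_int i" using B(1) unfolding affine_on_def by blast
  let ?x = "idx k"
  have e1: "a1 + b1 * real_of_int ?x = a2 + b2 * real_of_int ?x"
    using A(2) B(2) l1 l2 lt by (metis atLeastAtMost_iff order_refl less_imp_le)
  have e2: "a1 + b1 * real_of_int (?x + 1) = a2 + b2 * real_of_int (?x + 1)"
  proof -
    have "?x + 1 \<in> {idx k..idx (Suc k)}" using lt by simp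
    then show ?thesis using A(2) B(2) l1 l2 by metis
  qed
  have "b1 = b2" using e1 e2 by (simp add: algebra_simps)
  then have "a1 = a2" using e1 by simp
  then have leq: "l1 = l2" using l1 l2 \<open>b1 = b2\<close> by auto
  define z where "z i = w1 i - w2 i" for i
  have zU: "z \<in> Upzero p" using A(3) B(3) unfolding Upzero_def per_def z_def by (simp add: sum_subtractf)
  have Dz: "Dd N r1 i - Dd N r2 i = Dd N z i" for i
    unfolding A(4) B(4) leq z_def Dd_def by (simp add: diff_divide_distrib[symmetric] algebra_simps)
  have "ipRep p (rep k) (\<lambda>i. psicoll psi (coll k) i * Dd N r1 i) (Dd N z)
      - ipRep p (rep k) (\<lambda>i. psicoll psi (coll k) i * Dd N r2 i) (Dd N z) = 0"
    using A(5) B(5) zU by simp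
  then have "(\<Sum>i\<in>{rep k..<rep k + int p}. psicoll psi (coll k) i * Dd N r1 i * Dd N z i
       - psicoll psi (coll k) i * Dd N r2 i * Dd N z i) = 0"
    unfolding ipRep_def using p by (simp add: sum_subtractf right_diff_distrib[symmetric])
  also have "(\<Sum>i\<in>{rep k..<rep k + int p}. psicoll psi (coll k) i * Dd N r1 i * Dd N z i
       - psicoll psi (coll k) i * Dd N r2 i * Dd N z i)
     = (\<Sum>i\<in>{rep k..<rep k + int p}. psicoll psi (coll k) i * (Dd N z i)\<^sup>2)"
  proof (rule sum.cong[OF refl])
    fix i
    have "psicoll psi (coll k) i * Dd N r1 i * Dd N z i - psicoll psi (coll k) i * Dd N r2 i * Dd N z i
        = psicoll psi (coll k) i * (Dd N r1 i - Dd N r2 i) * Dd N z i" by (simp add: algebra_simps)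
    then show "psicoll psi (coll k) i * Dd N r1 i * Dd N z i - psicoll psi (coll k) i * Dd N r2 i * Dd N z i
        = psicoll psi (coll k) i * (Dd N z i)\<^sup>2" unfolding Dz by (simp add: power2_eq_square)
  qed
  finally have S0: "(\<Sum>i\<in>{rep k..<rep k + int p}. psicoll psi (coll k) i * (Dd N z i)\<^sup>2) = 0" .
  have st: "\<forall>i\<in>{rep k..<rep k + int p}. z (i+1) = z i"
  proof
    fix i assume i: "i \<in> {rep k..<rep k + int p}"
    have nn: "\<forall>j\<in>{rep k..<rep k + int p}. 0 \<le> psicoll psi (coll k) j * (Dd N z j)\<^sup>2"
      using pos unfolding psicoll_def by (simp add: less_imp_le)
    have "psicoll psi (coll k) i * (Dd N z i)\<^sup>2 = 0"
      using sum_nonneg_eq_0_iff[of "{rep k..<rep k + int p}" "\<lambda>j. psicoll psi (coll k) j * (Dd N z j)\<^sup>2"] nn S0 i by simp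
    then have "Dd N z i = 0" using pos unfolding psicoll_def
      by (metis mult_eq_0_iff less_irrefl power_eq_0_iff)
    then show "z (i+1) = z i" using eps_pos[OF N] unfolding Dd_def by simp
  qed
  have zper: "per p z" using zU unfolding Upzero_def by simp
  have zc: "z i = z (rep k)" for i by (rule per_const_window[OF p zper st])
  have "(\<Sum>i\<in>{1..int p}. z i) = 0" using zU unfolding Upzero_def by simp
  moreover have "(\<Sum>i\<in>{1..int p}. z i) = (\<Sum>i\<in>{1..int p}. z (rep k))"
    by (rule sum.cong[OF refl], rule zc)
  ultimately have "real p * z (rep k) = 0" by simp
  then have "z (rep k) = 0" using p by simp
  then have "w1 = w2" using zc unfolding z_def by (auto simp: fun_eq_iff)
  then show ?thesis using A(4) B(4) leq by simp
qed



lemma cell_solution: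
  assumes N: "1 \<le> N" and p: "1 \<le> p"
    and pos: "\<forall>i j. 0 < psi i j" and perp: "\<forall>i. per p (psi i)"
    and m: "mesh N K idx" and k: "k \<in> {1..K}" and v: "v \<in> UHper N K idx"
  shows "\<forall>i. Dd N (Rk N p psi idx rep coll k v) i = Dd N v (idx k) * psi0 p psi (coll k) / psi (coll k) i"
proof -
  define c0 where "c0 = coll k"
  have lt: "idx k < idx (Suc k)" by (rule mesh_step[OF m k])
  obtain a b where ab: "\<forall>j\<in>{idx k..idx (Suc k)}. v j = a + b * real_of_int j"
    using v k unfolding UHper_def affine_on_def by blast
  have ep: "eps N > 0" by (rule eps_pos[OF N])
  have sig: "Dd N v (idx k) = b / eps N"
  proof -
    have "v (idx k + 1) - v (idx k) = b" using ab lt by (auto simp: algebra_simps)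
    then show ?thesis by (simp add: Dd_def)
  qed
  define SI where "SI = (\<Sum>j\<in>{1..int p}. 1 / psi c0 j)"
  have SIp: "SI > 0" unfolding SI_def
    by (rule sum_pos) (use pos p in auto)
  define h where "h = psi0 p psi c0"
  have h: "h = real p / SI" unfolding h_def psi0_def avgY_def SI_def by simp
  define d where "d i = b * (h / psi c0 i - 1)" for i
  have dper: "per p d" using perp unfolding d_def per_def by simp
  have dsum: "(\<Sum>i\<in>{1..int p}. d i) = 0"
  proof -
    have "(\<Sum>i\<in>{1..int p}. d i) = b * (h * SI - real p)"
      unfolding d_def SI_def by (simp add: sum_subtractf sum_distrib_left algebra_simps)
    also have "h * SI = real p" using h SIp by simp
    finally show ?thesis by simp
  qed
  obtain w where w: "w \<in> Upzero p" "\<forall>i. w (i+1) - w i = d i"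
    using per_antideriv0[OF p dper dsum] by blast
  define l where "l i = a + b * real_of_int i" for i
  define r0 where "r0 = (\<lambda>i. l i + w i)"
  have Dr0: "Dd N r0 i = Dd N v (idx k) * h / psi c0 i" for i
  proof -
    have "r0 (i+1) - r0 i = b + d i" unfolding r0_def l_def using w(2)[rule_format, of i]
      by (simp add: algebra_simps)
    also have "\<dots> = b * h / psi c0 i" unfolding d_def using pos
      by (simp add: field_simps)
    finally have "Dd N r0 i = b * h / psi c0 i / eps N" by (simp add: Dd_def)
    then show ?thesis unfolding sig by simp
  qed
  have ok: "cell_ok N p psi idx rep coll k v r0"
    unfolding cell_ok_def
  proof (intro exI conjI)
    show "affine_on l UNIV" unfolding affine_on_def l_def by blast
    show "\<forall>i\<in>{idx k..idx (Suc k)}. l i = v i" using ab unfolding l_def by simp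
    show "w \<in> Upzero p" by (rule w(1))
    show "r0 = (\<lambda>i. l i + w i)" by (simp add: r0_def)
    show "\<forall>s\<in>Upzero p. ipRep p (rep k) (\<lambda>i. psicoll psi (coll k) i * Dd N r0 i) (Dd N s) = 0"
    proof
      fix s assume s: "s \<in> Upzero p"
      have "ipRep p (rep k) (\<lambda>i. psicoll psi (coll k) i * Dd N r0 i) (Dd N s)
          = (1 / real p) * (\<Sum>i\<in>{rep k..<rep k + int p}. (Dd N v (idx k) * h / eps N) * (s (i+1) - s i))"
        unfolding ipRep_def
      proof (rule arg_cong[where f="\<lambda>x. (1 / real p) * x"], rule sum.cong[OF refl])
        fix i
        have "psicoll psi (coll k) i * Dd N r0 i = Dd N v (idx k) * h"
          using pos[rule_format, of "coll k" i] by (simp add: psicoll_def Dr0 c0_def)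
        then show "psicoll psi (coll k) i * Dd N r0 i * Dd N s i = Dd N v (idx k) * h / eps N * (s (i + 1) - s i)"
          by (simp add: Dd_def[of N s])
      qed
      also have "\<dots> = (1 / real p) * (Dd N v (idx k) * h / eps N) * (s (rep k + int p) - s (rep k))"
        by (simp only: sum_distrib_left[symmetric] telescope_window mult.assoc)
      also have "s (rep k + int p) = s (rep k)" using s unfolding Upzero_def per_def by simp
      finally show "ipRep p (rep k) (\<lambda>i. psicoll psi (coll k) i * Dd N r0 i) (Dd N s) = 0" by simp
    qed
  qed
  have "Rk N p psi idx rep coll k v = r0"
    unfolding Rk_def
  proof (rule the_equality)
    show "cell_ok N p psi idx rep coll k v r0" by (rule ok)
    fix r assume "cell_ok N p psi idx rep coll k v r"
    then show "r = r0" using cell_unique[OF N p pos lt _ ok] by blast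
  qed
  then show ?thesis using Dr0 unfolding h_def c0_def by simp
qed



lemma hqc_term:
  assumes N: "1 \<le> N" and p: "1 \<le> p"
    and pos: "\<forall>i j. 0 < psi i j" and perp: "\<forall>i. per p (psi i)"
    and m: "mesh N K idx" and k: "k \<in> {1..K}" and u: "u \<in> UHper N K idx" and v: "v \<in> UHper N K idx"
  shows "ipRep p (rep k) (\<lambda>i. psicoll psi (coll k) i * Dd N (Rk N p psi idx rep coll k u) i)
            (Dd N (Rk N p psi idx rep coll k v)) = Dd N u (idx k) * Dd N v (idx k) * psi0 p psi (coll k)"
proof -
  define c0 where "c0 = coll k"
  define h where "h = psi0 p psi c0"
  define SI where "SI = (\<Sum>j\<in>{1..int p}. 1 / psi c0 j)"
  have SIp: "SI > 0" unfolding SI_def by (rule sum_pos) (use pos p in auto)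
  have h: "h = real p / SI" unfolding h_def psi0_def avgY_def SI_def by simp
  note Ru = cell_solution[OF N p pos perp m k u, rule_format]
  note Rv = cell_solution[OF N p pos perp m k v, rule_format]
  have "ipRep p (rep k) (\<lambda>i. psicoll psi (coll k) i * Dd N (Rk N p psi idx rep coll k u) i)
            (Dd N (Rk N p psi idx rep coll k v))
     = (1 / real p) * (\<Sum>i\<in>{rep k..<rep k + int p}. (Dd N u (idx k) * Dd N v (idx k) * h * h) * (1 / psi c0 i))"
    unfolding ipRep_def
  proof (rule arg_cong[where f="\<lambda>x. (1 / real p) * x"], rule sum.cong[OF refl])
    fix i
    have "psi c0 i > 0" using pos by simp
    then show "psicoll psi (coll k) i * Dd N (Rk N p psi idx rep coll k u) i * Dd N (Rk N p psi idx rep coll k v) i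
        = (Dd N u (idx k) * Dd N v (idx k) * h * h) * (1 / psi c0 i)"
      unfolding Ru Rv psicoll_def c0_def[symmetric] h_def[symmetric] by (simp add: field_simps power2_eq_square)
  qed
  also have "\<dots> = (1 / real p) * (Dd N u (idx k) * Dd N v (idx k) * h * h) * SI"
  proof -
    have "per p (\<lambda>i. 1 / psi c0 i)" using perp unfolding per_def by simp
    then have "(\<Sum>i\<in>{rep k..<rep k + int p}. 1 / psi c0 i) = SI" unfolding SI_def by (rule per_sum_shift)
    then have "(\<Sum>i\<in>{rep k..<rep k + int p}. (Dd N u (idx k) * Dd N v (idx k) * h * h) * (1 / psi c0 i))
        = (Dd N u (idx k) * Dd N v (idx k) * h * h) * SI"
      by (simp only: sum_distrib_left[symmetric])
    then show ?thesis by (simp only: mult.assoc)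
  qed
  also have "\<dots> = Dd N u (idx k) * Dd N v (idx k) * h" using h SIp p by (simp add: field_simps)
  finally show ?thesis unfolding h_def c0_def .
qed

lemma global_bound:
  assumes N: "1 \<le> N" and p: "1 \<le> p" and ts: "twoscale N p g"
    and b: "\<forall>i\<in>{1..int N}. \<forall>j\<in>{1..int p}. P (g i j)"
  shows "P (g i j)"
proof -
  have perj: "per p (g i')" for i' using ts unfolding twoscale_def per_def by simp
  have peri: "per N (\<lambda>i. g i j')" for j' using ts unfolding twoscale_def per_def by simp
  have "\<forall>i\<in>{1..int N}. P (g i j)"
  proof
    fix i assume i: "i \<in> {1..int N}"
    show "P (g i j)" using per_global[OF perj[of i] p, where P=P] b i by blast
  qed
  then show ?thesis using per_global[OF peri[of j] N, where P=P] by blast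
qed

lemma psi0_bounds:
  assumes p: "1 \<le> p" and cl: "0 < cl" and b: "\<forall>j. cl \<le> psi i j \<and> psi i j \<le> Cu"
  shows "cl \<le> psi0 p psi i" "psi0 p psi i \<le> Cu"
proof -
  have Cu: "0 < Cu" using b cl by (meson less_le_trans order.trans)
  have a1: "(\<Sum>j\<in>{1..int p}. 1 / psi i j) \<le> (\<Sum>j\<in>{1..int p}. 1 / cl)"
    by (rule sum_mono, rule frac_le) (use b cl in auto)
  have a2: "(\<Sum>j\<in>{1..int p}. 1 / Cu) \<le> (\<Sum>j\<in>{1..int p}. 1 / psi i j)"
    by (rule sum_mono, rule frac_le) (use b cl Cu in \<open>auto intro: less_le_trans\<close>)
  define A where "A = (1 / real p) * (\<Sum>j\<in>{1..int p}. 1 / psi i j)"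
  have A1: "A \<le> 1 / cl" using a1 p unfolding A_def by (simp add: field_simps)
  have A2: "1 / Cu \<le> A" using a2 p unfolding A_def by (simp add: field_simps)
  have e: "psi0 p psi i = 1 / A" unfolding A_def psi0_def avgY_def by simp
  have Ap: "A > 0" using A2 Cu by (meson less_le_trans zero_less_divide_1_iff)
  have "A * cl \<le> 1" using A1 cl by (simp add: le_divide_eq)
  then show "cl \<le> psi0 p psi i" unfolding e using Ap by (simp add: le_divide_eq mult.commute)
  have "1 \<le> A * Cu" using A2 Cu by (simp add: divide_le_eq)
  then show "psi0 p psi i \<le> Cu" unfolding e using Ap by (simp add: divide_le_eq mult.commute)
qed



lemma cs_weighted:
  fixes H x y :: "nat \<Rightarrow> real"
  assumes "\<forall>k\<in>A. 0 \<le> H k"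
  shows "(\<Sum>k\<in>A. H k * \<bar>x k\<bar> * \<bar>y k\<bar>) \<le> sqrt (\<Sum>k\<in>A. H k * (x k)\<^sup>2) * sqrt (\<Sum>k\<in>A. H k * (y k)\<^sup>2)"
proof -
  have e1: "(\<Sum>k\<in>A. H k * \<bar>x k\<bar> * \<bar>y k\<bar>) = (\<Sum>k\<in>A. (sqrt (H k) * \<bar>x k\<bar>) * (sqrt (H k) * \<bar>y k\<bar>))"
    by (rule sum.cong[OF refl]) (use assms in \<open>simp add: algebra_simps real_sqrt_mult[symmetric]\<close>)
  have e2: "(\<Sum>k\<in>A. H k * (x k)\<^sup>2) = (\<Sum>k\<in>A. (sqrt (H k) * \<bar>x k\<bar>)\<^sup>2)"
    by (rule sum.cong[OF refl]) (use assms in \<open>simp add: power_mult_distrib\<close>)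
  have e3: "(\<Sum>k\<in>A. H k * (y k)\<^sup>2) = (\<Sum>k\<in>A. (sqrt (H k) * \<bar>y k\<bar>)\<^sup>2)"
    by (rule sum.cong[OF refl]) (use assms in \<open>simp add: power_mult_distrib\<close>)
  have nn: "0 \<le> (\<Sum>k\<in>A. (sqrt (H k) * \<bar>x k\<bar>) * (sqrt (H k) * \<bar>y k\<bar>))"
    by (rule sum_nonneg) (use assms in simp)
  have "(\<Sum>k\<in>A. (sqrt (H k) * \<bar>x k\<bar>) * (sqrt (H k) * \<bar>y k\<bar>))
      = sqrt ((\<Sum>k\<in>A. (sqrt (H k) * \<bar>x k\<bar>) * (sqrt (H k) * \<bar>y k\<bar>))\<^sup>2)" using nn by simp
  also have "\<dots> \<le> sqrt ((\<Sum>k\<in>A. (sqrt (H k) * \<bar>x k\<bar>)\<^sup>2) * (\<Sum>k\<in>A. (sqrt (H k) * \<bar>y k\<bar>)\<^sup>2))"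
    by (rule real_sqrt_le_mono, rule Cauchy_Schwarz_ineq_sum)
  finally show ?thesis unfolding e1 e2 e3 by (simp add: real_sqrt_mult)
qed

lemma quad_step:
  fixes cl X M :: real
  assumes "0 < cl" "0 \<le> X" "0 \<le> M" "cl * X\<^sup>2 \<le> M * X"
  shows "X \<le> M / cl"
proof (cases "X = 0")
  case True then show ?thesis using assms by simp
next
  case False
  then have "X > 0" using assms by simp
  then have "cl * X \<le> M" using assms(4) by (simp add: power2_eq_square)
  then show ?thesis using assms(1) by (simp add: field_simps)
qed

lemma card_sum_int: "a \<le> b \<Longrightarrow> (\<Sum>i\<in>{a..<b::int}. (1::real)) = real_of_int (b - a)"
  by simp

lemma core:
  assumes st: "standing N p psi cl Cu C' f K idx rep coll"
    and hq: "HQC_sol N p psi f K idx rep coll uH" and hm: "hom_sol N p psi f K idx ut"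
    and dl: "\<forall>k\<in>{1..K}. \<bar>(1 / real N) * (\<Sum>i\<in>{idx k..<idx (Suc k)}. psi0 p psi i)
              - Hk N idx k * psi0 p psi (coll k)\<bar> \<le> dlt * Hk N idx k"
  shows "H1 N (\<lambda>i. uH i - ut i) \<le> dlt / cl\<^sup>2 * Hm1 N f"
proof -
  have N: "1 \<le> N" and p: "1 \<le> p" and ts: "twoscale N p psi" and a1: "A1 N p psi cl Cu"
    and m: "mesh N K idx" using st unfolding standing_def by auto
  have cl: "0 < cl" using a1 unfolding A1_def by simp
  have gb: "cl \<le> psi i j \<and> psi i j \<le> Cu" for i j
    by (rule global_bound[OF N p ts, where P="\<lambda>x. cl \<le> x \<and> x \<le> Cu"]) (use a1 in \<open>simp add: A1_def\<close>)
  have pos: "\<forall>i j. 0 < psi i j" using gb cl by (meson less_le_trans)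
  have perp: "\<forall>i. per p (psi i)" using ts unfolding twoscale_def per_def by simp
  have p0: "cl \<le> psi0 p psi i" for i using psi0_bounds(1)[OF p cl] gb by blast
  have NN: "real N > 0" using N by simp
  have Hk_eq: "Hk N idx k = (1 / real N) * (\<Sum>i\<in>{idx k..<idx (Suc k)}. (1::real))" if k: "k \<in> {1..K}" for k
    using mesh_step[OF m k] unfolding Hk_def eps_def by simp
  have Hk_pos: "0 < Hk N idx k" if k: "k \<in> {1..K}" for k
    using mesh_step[OF m k] NN unfolding Hk_def eps_def by simp
  have Hk_nn: "0 \<le> Hk N idx k" if k: "k \<in> {1..K}" for k using Hk_pos[OF k] by simp
  have K1: "1 \<in> {1..K}" using m unfolding mesh_def by simp
  have dlt0: "0 \<le> dlt"
  proof -
    have "0 \<le> dlt * Hk N idx 1" using dl K1 by (meson abs_ge_zero order_trans)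
    then show ?thesis using Hk_pos[OF K1] by (simp add: zero_le_mult_iff)
  qed
  have uHZ: "uH \<in> UHzero N K idx" using hq unfolding HQC_sol_def by simp
  have utZ: "ut \<in> UHzero N K idx" using hm unfolding hom_sol_def by simp
  define e where "e = (\<lambda>i. uH i - ut i)"
  have eZ: "e \<in> UHzero N K idx"
  proof -
    have "per N e" using uHZ utZ unfolding e_def UHzero_def Uzero_def per_def by simp
    moreover have "avgX N e = 0" using uHZ utZ unfolding e_def UHzero_def Uzero_def avgX_def
      by (auto simp add: sum_subtractf right_diff_distrib)
    moreover have "affine_on e {idx k..idx (Suc k)}" if k: "k \<in> {1..K}" for k
    proof -
      obtain a1 b1 where "\<forall>i\<in>{idx k..idx (Suc k)}. uH i = a1 + b1 * real_of_int i"
        using uHZ k unfolding UHzero_def UHper_def affine_on_def by blast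
      moreover obtain a2 b2 where "\<forall>i\<in>{idx k..idx (Suc k)}. ut i = a2 + b2 * real_of_int i"
        using utZ k unfolding UHzero_def UHper_def affine_on_def by blast
      ultimately have "\<forall>i\<in>{idx k..idx (Suc k)}. e i = (a1 - a2) + (b1 - b2) * real_of_int i"
        unfolding e_def by (simp add: algebra_simps)
      then show ?thesis unfolding affine_on_def by blast
    qed
    ultimately show ?thesis unfolding UHzero_def UHper_def Uzero_def by blast
  qed
  have uH: "uH \<in> UHper N K idx" and ut: "ut \<in> UHper N K idx" and eP: "e \<in> UHper N K idx"
    using uHZ utZ eZ unfolding UHzero_def by auto
  have De: "Dd N e i = Dd N uH i - Dd N ut i" for i unfolding e_def Dd_def by (simp add: diff_divide_distrib)
  define A where "A k = (1 / real N) * (\<Sum>i\<in>{idx k..<idx (Suc k)}. psi0 p psi i)" for k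
  define h where "h k = psi0 p psi (coll k)" for k
  define s where "s u k = Dd N u (idx k)" for u k
  have hqc: "(\<Sum>k=1..K. Hk N idx k * h k * s uH k * s v k) = ipX N f v" if v: "v \<in> UHzero N K idx" for v
  proof -
    have vP: "v \<in> UHper N K idx" using v unfolding UHzero_def by simp
    have "(\<Sum>k=1..K. Hk N idx k * h k * s uH k * s v k) = (\<Sum>k=1..K. Hk N idx k * ipRep p (rep k)
            (\<lambda>i. psicoll psi (coll k) i * Dd N (Rk N p psi idx rep coll k uH) i)
            (Dd N (Rk N p psi idx rep coll k v)))"
      by (rule sum.cong[OF refl]) (simp add: hqc_term[OF N p pos perp m _ uH vP] h_def s_def)
    also have "\<dots> = ipX N f v" using hq v unfolding HQC_sol_def by simp
    finally show ?thesis .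
  qed
  have hom: "(\<Sum>k=1..K. s ut k * s v k * A k) = ipX N f v" if v: "v \<in> UHzero N K idx" for v
  proof -
    have vP: "v \<in> UHper N K idx" using v unfolding UHzero_def by simp
    have "(\<Sum>k=1..K. s ut k * s v k * A k) = ipX N (\<lambda>i. psi0 p psi i * Dd N ut i) (Dd N v)"
      unfolding bilinear[OF m ut vP] A_def s_def ..
    also have "\<dots> = ipX N f v" using hm v unfolding hom_sol_def by simp
    finally show ?thesis .
  qed
  have nrm: "H1 N v = sqrt (\<Sum>k=1..K. Hk N idx k * (s v k)\<^sup>2)" if v: "v \<in> UHper N K idx" for v
  proof -
    have "ipX N (Dd N v) (Dd N v) = ipX N (\<lambda>i. 1 * Dd N v i) (Dd N v)" by simp
    also have "\<dots> = (\<Sum>k=1..K. Hk N idx k * (s v k)\<^sup>2)"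
      unfolding bilinear[OF m v v] s_def
      by (rule sum.cong[OF refl]) (simp add: Hk_eq power2_eq_square)
    finally show ?thesis unfolding H1_def L2_def by simp
  qed
  define P where "P = (\<Sum>k=1..K. Hk N idx k * (s uH k)\<^sup>2)"
  define E where "E = (\<Sum>k=1..K. Hk N idx k * (s e k)\<^sup>2)"
  have P0: "0 \<le> P" unfolding P_def by (rule sum_nonneg) (auto intro!: mult_nonneg_nonneg Hk_nn)
  have E0: "0 \<le> E" unfolding E_def by (rule sum_nonneg) (auto intro!: mult_nonneg_nonneg Hk_nn)
  have Hm0: "0 \<le> Hm1 N f" using Hm1_bound(2)[OF N] uHZ unfolding UHzero_def by blast
  have "cl * P \<le> (\<Sum>k=1..K. Hk N idx k * h k * s uH k * s uH k)"
    unfolding P_def sum_distrib_left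
    by (rule sum_mono) (use p0 Hk_pos in \<open>auto simp: h_def power2_eq_square mult.assoc intro!: mult_right_mono[where c="s uH k * s uH k" for k, simplified mult.assoc] \<close>)
  also have "\<dots> = ipX N f uH" by (rule hqc[OF uHZ])
  also have "\<dots> \<le> Hm1 N f * H1 N uH" using Hm1_bound(1)[OF N] uHZ unfolding UHzero_def by blast
  also have "H1 N uH = sqrt P" unfolding nrm[OF uH] P_def ..
  finally have s1: "cl * (sqrt P)\<^sup>2 \<le> Hm1 N f * sqrt P" using P0 by simp
  have sP: "sqrt P \<le> Hm1 N f / cl" by (rule quad_step[OF cl _ Hm0 s1]) (use P0 in simp)
  have Ak: "cl * Hk N idx k \<le> A k" if k: "k \<in> {1..K}" for k
  proof -
    have "(\<Sum>i\<in>{idx k..<idx (Suc k)}. cl) \<le> (\<Sum>i\<in>{idx k..<idx (Suc k)}. psi0 p psi i)"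
      by (rule sum_mono) (rule p0)
    then have "(1 / real N) * (\<Sum>i\<in>{idx k..<idx (Suc k)}. cl) \<le> A k"
      unfolding A_def using NN by (simp add: divide_right_mono)
    moreover have "(1 / real N) * (\<Sum>i\<in>{idx k..<idx (Suc k)}. cl) = cl * Hk N idx k"
      unfolding Hk_eq[OF k] by (simp add: sum_distrib_left[symmetric])
    ultimately show ?thesis by simp
  qed
  have "cl * E \<le> (\<Sum>k=1..K. s e k * s e k * A k)"
    unfolding E_def sum_distrib_left
  proof (rule sum_mono)
    fix k assume k: "k \<in> {1..K}"
    have "cl * (Hk N idx k * (s e k)\<^sup>2) = (cl * Hk N idx k) * (s e k)\<^sup>2" by simp
    also have "\<dots> \<le> A k * (s e k)\<^sup>2" by (rule mult_right_mono[OF Ak[OF k]]) simp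
    finally show "cl * (Hk N idx k * (s e k)\<^sup>2) \<le> s e k * s e k * A k" by (simp add: power2_eq_square ac_simps)
  qed
  also have "\<dots> = (\<Sum>k=1..K. s uH k * s e k * A k) - (\<Sum>k=1..K. s ut k * s e k * A k)"
    by (simp add: s_def De sum_subtractf[symmetric] algebra_simps)
  also have "(\<Sum>k=1..K. s ut k * s e k * A k) = (\<Sum>k=1..K. Hk N idx k * h k * s uH k * s e k)"
    using hom[OF eZ] hqc[OF eZ] by simp
  also have "(\<Sum>k=1..K. s uH k * s e k * A k) - (\<Sum>k=1..K. Hk N idx k * h k * s uH k * s e k)
      = (\<Sum>k=1..K. (A k - Hk N idx k * h k) * s uH k * s e k)"
    by (simp add: sum_subtractf[symmetric] algebra_simps)
  also have "\<dots> \<le> (\<Sum>k=1..K. (dlt * Hk N idx k) * \<bar>s uH k\<bar> * \<bar>s e k\<bar>)"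
  proof (rule sum_mono)
    fix k assume k: "k \<in> {1..K}"
    have "(A k - Hk N idx k * h k) * s uH k * s e k \<le> \<bar>A k - Hk N idx k * h k\<bar> * \<bar>s uH k\<bar> * \<bar>s e k\<bar>"
      by (simp add: abs_mult[symmetric])
    also have "\<dots> \<le> (dlt * Hk N idx k) * \<bar>s uH k\<bar> * \<bar>s e k\<bar>"
      using dl k unfolding A_def h_def by (simp add: mult_right_mono)
    finally show "(A k - Hk N idx k * h k) * s uH k * s e k \<le> (dlt * Hk N idx k) * \<bar>s uH k\<bar> * \<bar>s e k\<bar>" .
  qed
  also have "\<dots> = dlt * (\<Sum>k=1..K. Hk N idx k * \<bar>s uH k\<bar> * \<bar>s e k\<bar>)"
    by (simp add: sum_distrib_left mult.assoc)
  also have "\<dots> \<le> dlt * (sqrt P * sqrt E)"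
    unfolding P_def E_def
    by (rule mult_left_mono[OF cs_weighted dlt0]) (auto intro!: Hk_nn)
  finally have s2: "cl * (sqrt E)\<^sup>2 \<le> (dlt * sqrt P) * sqrt E" using E0 by (simp add: mult.assoc)
  have sE: "sqrt E \<le> dlt * sqrt P / cl" by (rule quad_step[OF cl _ _ s2]) (use dlt0 P0 E0 in simp_all)
  also have "\<dots> \<le> dlt * (Hm1 N f / cl) / cl"
    by (rule divide_right_mono[OF mult_left_mono[OF sP dlt0]]) (use cl in simp)
  finally have "sqrt E \<le> dlt / cl\<^sup>2 * Hm1 N f" by (simp add: power2_eq_square)
  moreover have "H1 N e = sqrt E" unfolding nrm[OF eP] E_def ..
  ultimately show ?thesis unfolding e_def by simp
qed



lemma lip_int:
  fixes g :: "int \<Rightarrow> real"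
  assumes "\<forall>l. \<bar>g (l+1) - g l\<bar> \<le> B"
  shows "\<bar>g i - g c\<bar> \<le> B * \<bar>real_of_int (i - c)\<bar>"
proof -
  have fw: "\<bar>g (c + int n) - g c\<bar> \<le> B * real n" for n
  proof (induction n)
    case 0 then show ?case by simp
  next
    case (Suc n)
    have a: "\<bar>g (c + int n + 1) - g (c + int n)\<bar> \<le> B" using assms by blast
    have "g (c + int (Suc n)) - g c = (g (c + int n + 1) - g (c + int n)) + (g (c + int n) - g c)"
      by (simp add: algebra_simps)
    then have "\<bar>g (c + int (Suc n)) - g c\<bar> \<le> \<bar>g (c + int n + 1) - g (c + int n)\<bar> + \<bar>g (c + int n) - g c\<bar>"
      by (metis abs_triangle_ineq)
    then have "\<bar>g (c + int (Suc n)) - g c\<bar> \<le> B * real n + B" using Suc a by linarith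
    then show ?case by (simp add: algebra_simps)
  qed
  have bw: "\<bar>g (c - int n) - g c\<bar> \<le> B * real n" for n
  proof (induction n)
    case 0 then show ?case by simp
  next
    case (Suc n)
    have a: "\<bar>g (c - int n - 1 + 1) - g (c - int n - 1)\<bar> \<le> B" using assms by blast
    have "g (c - int (Suc n)) - g c = -(g (c - int n - 1 + 1) - g (c - int n - 1)) + (g (c - int n) - g c)"
      by (simp add: algebra_simps)
    then have "\<bar>g (c - int (Suc n)) - g c\<bar> \<le> \<bar>g (c - int n - 1 + 1) - g (c - int n - 1)\<bar> + \<bar>g (c - int n) - g c\<bar>"
      by (metis abs_minus_cancel abs_triangle_ineq)
    then have "\<bar>g (c - int (Suc n)) - g c\<bar> \<le> B * real n + B" using Suc a by linarith
    then show ?case by (simp add: algebra_simps)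
  qed
  show ?thesis
  proof (cases "c \<le> i")
    case True
    then have "i = c + int (nat (i - c))" by simp
    then show ?thesis using fw[of "nat (i - c)"] True by (metis abs_of_nonneg of_int_of_nat_eq of_nat_0_le_iff diff_ge_0_iff_ge nat_0_le of_int_nonneg)
  next
    case False
    then have "i = c - int (nat (c - i))" by simp
    moreover have "\<bar>real_of_int (i - c)\<bar> = real (nat (c - i))" using False by simp
    ultimately show ?thesis using bw[of "nat (c - i)"] by metis
  qed
qed

lemma taylor_int:
  fixes g :: "int \<Rightarrow> real"
  assumes sd: "\<forall>l. \<bar>g (l+2) - 2 * g (l+1) + g l\<bar> \<le> M"
  shows "\<bar>g i - g c - real_of_int (i - c) * (g (c+1) - g c)\<bar> \<le> M * (real_of_int (i - c))\<^sup>2"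
proof -
  define d where "d l = g (l+1) - g l" for l
  have M0: "0 \<le> M" using sd by (meson abs_ge_zero order_trans)
  have "\<forall>l. \<bar>d (l+1) - d l\<bar> \<le> M"
  proof
    fix l
    have "d (l+1) - d l = g (l+2) - 2 * g (l+1) + g l" unfolding d_def by (simp add: algebra_simps)
    then show "\<bar>d (l+1) - d l\<bar> \<le> M" using sd by simp
  qed
  note L = lip_int[OF this]
  have fw: "\<bar>g (c + int n) - g c - real n * d c\<bar> \<le> M * (real n)\<^sup>2" for n
  proof (induction n)
    case 0 then show ?case by simp
  next
    case (Suc n)
    have a: "\<bar>d (c + int n) - d c\<bar> \<le> M * real n" using L[of "c + int n" c] by simp
    have "g (c + int (Suc n)) - g c - real (Suc n) * d c
        = (g (c + int n) - g c - real n * d c) + (d (c + int n) - d c)"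
      unfolding d_def by (simp add: algebra_simps)
    then have "\<bar>g (c + int (Suc n)) - g c - real (Suc n) * d c\<bar>
        \<le> \<bar>g (c + int n) - g c - real n * d c\<bar> + \<bar>d (c + int n) - d c\<bar>"
      by (metis abs_triangle_ineq)
    also have "\<dots> \<le> M * (real n)\<^sup>2 + M * real n" using Suc a by linarith
    also have "\<dots> \<le> M * (real (Suc n))\<^sup>2" using M0 by (simp add: power2_eq_square algebra_simps)
    finally show ?case .
  qed
  have bw: "\<bar>g (c - int n) - g c + real n * d c\<bar> \<le> M * (real n)\<^sup>2" for n
  proof (induction n)
    case 0 then show ?case by simp
  next
    case (Suc n)
    have a: "\<bar>d (c - int n - 1) - d c\<bar> \<le> M * real (Suc n)" using L[of "c - int n - 1" c] by simp
    have "g (c - int (Suc n)) - g c + real (Suc n) * d c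
        = (g (c - int n) - g c + real n * d c) - (d (c - int n - 1) - d c)"
      unfolding d_def by (simp add: algebra_simps)
    then have "\<bar>g (c - int (Suc n)) - g c + real (Suc n) * d c\<bar>
        \<le> \<bar>g (c - int n) - g c + real n * d c\<bar> + \<bar>d (c - int n - 1) - d c\<bar>"
      by (metis abs_triangle_ineq4)
    also have "\<dots> \<le> M * (real n)\<^sup>2 + M * real (Suc n)" using Suc a by linarith
    also have "\<dots> \<le> M * (real (Suc n))\<^sup>2" using M0 by (simp add: power2_eq_square algebra_simps)
    finally show ?case .
  qed
  show ?thesis
  proof (cases "c \<le> i")
    case True
    define n where "n = nat (i - c)"
    have i: "i = c + int n" and r: "real_of_int (i - c) = real n" using True unfolding n_def by simp_all
    show ?thesis unfolding r using fw[of n] unfolding i d_def by simp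
  next
    case False
    define n where "n = nat (c - i)"
    have i: "i = c - int n" and r: "real_of_int (i - c) = - real n" using False unfolding n_def by simp_all
    show ?thesis unfolding r using bw[of n] unfolding i d_def by simp
  qed
qed

lemma sum_int_id:
  "(\<Sum>i\<in>{a..<a + int n}. real_of_int i) = real n * real_of_int a + real n * (real n - 1) / 2"
proof (induction n)
  case 0 then show ?case by simp
next
  case (Suc n)
  have "{a..<a + int (Suc n)} = insert (a + int n) {a..<a + int n}" by auto
  then have "(\<Sum>i\<in>{a..<a + int (Suc n)}. real_of_int i) = real_of_int (a + int n) + (\<Sum>i\<in>{a..<a + int n}. real_of_int i)"
    by simp
  then show ?case using Suc by (simp add: field_simps)
qed



lemma Hk_sum: "idx k \<le> idx (Suc k) \<Longrightarrow> Hk N idx k = (1 / real N) * (\<Sum>i\<in>{idx k..<idx (Suc k)}. (1::real))"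
  unfolding Hk_def eps_def by simp

lemma elem_diff:
  assumes "idx k \<le> idx (Suc k)"
  shows "(1 / real N) * (\<Sum>i\<in>{idx k..<idx (Suc k)}. g i) - Hk N idx k * g c
       = (1 / real N) * (\<Sum>i\<in>{idx k..<idx (Suc k)}. g i - g c)"
  unfolding Hk_sum[OF assms] by (simp add: sum_subtractf right_diff_distrib)

lemma elem_bound_a:
  fixes g :: "int \<Rightarrow> real"
  assumes N: "1 \<le> N" and st: "\<forall>l. \<bar>g (l+1) - g l\<bar> \<le> L * eps N"
    and lt: "idx k < idx (Suc k)" and c: "c \<in> {idx k..<idx (Suc k)}" and hm: "Hk N idx k \<le> Hm"
  shows "\<bar>(1 / real N) * (\<Sum>i\<in>{idx k..<idx (Suc k)}. g i) - Hk N idx k * g c\<bar> \<le> (L * Hm) * Hk N idx k"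
proof -
  have ep: "eps N > 0" using eps_pos[OF N] .
  have L0: "0 \<le> L" using st ep by (meson abs_ge_zero order_trans zero_le_mult_iff not_le)
  have NN: "real N > 0" using N by simp
  have "\<bar>\<Sum>i\<in>{idx k..<idx (Suc k)}. g i - g c\<bar> \<le> (\<Sum>i\<in>{idx k..<idx (Suc k)}. \<bar>g i - g c\<bar>)"
    by (rule sum_abs)
  also have "\<dots> \<le> (\<Sum>i\<in>{idx k..<idx (Suc k)}. L * Hm)"
  proof (rule sum_mono)
    fix i assume i: "i \<in> {idx k..<idx (Suc k)}"
    have "\<bar>g i - g c\<bar> \<le> L * eps N * \<bar>real_of_int (i - c)\<bar>" by (rule lip_int[OF st])
    also have "\<dots> \<le> L * eps N * real_of_int (idx (Suc k) - idx k)"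
      using i c L0 ep by (intro mult_left_mono) auto
    also have "\<dots> = L * Hk N idx k" unfolding Hk_def by simp
    also have "\<dots> \<le> L * Hm" using hm L0 by (rule mult_left_mono)
    finally show "\<bar>g i - g c\<bar> \<le> L * Hm" .
  qed
  also have "\<dots> = (L * Hm) * (\<Sum>i\<in>{idx k..<idx (Suc k)}. (1::real))" by simp
  finally have "(1 / real N) * \<bar>\<Sum>i\<in>{idx k..<idx (Suc k)}. g i - g c\<bar> \<le> (L * Hm) * Hk N idx k"
    unfolding Hk_sum[OF less_imp_le[OF lt]] using NN by (simp add: divide_right_mono)
  then show ?thesis unfolding elem_diff[OF less_imp_le[OF lt]] using NN by (simp add: abs_mult)
qed

lemma elem_bound_b:
  fixes g :: "int \<Rightarrow> real"
  assumes N: "1 \<le> N" and st: "\<forall>l. \<bar>g (l+1) - g l\<bar> \<le> L * eps N"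
    and sd: "\<forall>l. \<bar>g (l+2) - 2 * g (l+1) + g l\<bar> \<le> C2 * (eps N)\<^sup>2"
    and lt: "idx k < idx (Suc k)" and c: "c \<in> {idx k..<idx (Suc k)}" and hm: "Hk N idx k \<le> Hm"
    and cc: "\<bar>eps N * real_of_int c - (eps N * real_of_int (idx k) + eps N * real_of_int (idx (Suc k) - 1)) / 2\<bar> \<le> eps N * Ccoll"
  shows "\<bar>(1 / real N) * (\<Sum>i\<in>{idx k..<idx (Suc k)}. g i) - Hk N idx k * g c\<bar>
     \<le> (C2 * Hm\<^sup>2 + L * Ccoll * eps N) * Hk N idx k"
proof -
  have ep: "eps N > 0" using eps_pos[OF N] .
  have L0: "0 \<le> L" using st ep by (meson abs_ge_zero order_trans zero_le_mult_iff not_le)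
  have C20: "0 \<le> C2" using sd ep by (meson abs_ge_zero order_trans zero_le_mult_iff not_le zero_less_power)
  have NN: "real N > 0" using N by simp
  define a where "a = idx k"
  define n where "n = nat (idx (Suc k) - idx k)"
  have b: "idx (Suc k) = a + int n" unfolding a_def n_def using lt by simp
  have Hk: "Hk N idx k = eps N * real n" unfolding Hk_def n_def using lt by simp
  define dc where "dc = g (c+1) - g c"
  have dcb: "\<bar>dc\<bar> \<le> L * eps N" unfolding dc_def using st by blast
  have cc': "\<bar>real_of_int c - (2 * real_of_int a + real n - 1) / 2\<bar> \<le> Ccoll"
  proof -
    have "eps N * real_of_int c - (eps N * real_of_int (idx k) + eps N * real_of_int (idx (Suc k) - 1)) / 2
        = eps N * (real_of_int c - (2 * real_of_int a + real n - 1) / 2)"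
      unfolding b a_def[symmetric] by (simp add: algebra_simps)
    then have "eps N * \<bar>real_of_int c - (2 * real_of_int a + real n - 1) / 2\<bar> \<le> eps N * Ccoll"
      using cc ep by (simp add: abs_mult)
    then show ?thesis using ep by simp
  qed
  have Cc0: "0 \<le> Ccoll" using cc' by (meson abs_ge_zero order_trans)
  have S1: "(\<Sum>i\<in>{a..<a + int n}. real_of_int (i - c)) = real n * ((2 * real_of_int a + real n - 1) / 2 - real_of_int c)"
    by (simp add: sum_subtractf sum_int_id field_simps)
  have eqS: "(\<Sum>i\<in>{a..<a + int n}. g i - g c)
      = (\<Sum>i\<in>{a..<a + int n}. real_of_int (i - c)) * dc + (\<Sum>i\<in>{a..<a + int n}. g i - g c - real_of_int (i - c) * dc)"
  proof -
    have "(\<Sum>i\<in>{a..<a + int n}. g i - g c) = (\<Sum>i\<in>{a..<a + int n}. real_of_int (i - c) * dc + (g i - g c - real_of_int (i - c) * dc))"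
      by (rule sum.cong) simp_all
    also have "\<dots> = (\<Sum>i\<in>{a..<a + int n}. real_of_int (i - c) * dc) + (\<Sum>i\<in>{a..<a + int n}. g i - g c - real_of_int (i - c) * dc)"
      by (rule sum.distrib)
    also have "(\<Sum>i\<in>{a..<a + int n}. real_of_int (i - c) * dc) = (\<Sum>i\<in>{a..<a + int n}. real_of_int (i - c)) * dc"
      by (rule sum_distrib_right[symmetric])
    finally show ?thesis .
  qed
  have "\<bar>\<Sum>i\<in>{a..<a + int n}. g i - g c\<bar>
      \<le> \<bar>\<Sum>i\<in>{a..<a + int n}. real_of_int (i - c)\<bar> * \<bar>dc\<bar> + (\<Sum>i\<in>{a..<a + int n}. \<bar>g i - g c - real_of_int (i - c) * dc\<bar>)"
  proof -
    have "\<bar>\<Sum>i\<in>{a..<a + int n}. g i - g c - real_of_int (i - c) * dc\<bar> \<le> (\<Sum>i\<in>{a..<a + int n}. \<bar>g i - g c - real_of_int (i - c) * dc\<bar>)"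
      by (rule sum_abs)
    then show ?thesis unfolding eqS using abs_triangle_ineq[of "(\<Sum>i\<in>{a..<a + int n}. real_of_int (i - c)) * dc" "\<Sum>i\<in>{a..<a + int n}. g i - g c - real_of_int (i - c) * dc"]
      by (simp only: abs_mult)
  qed
  also have "\<bar>\<Sum>i\<in>{a..<a + int n}. real_of_int (i - c)\<bar> * \<bar>dc\<bar> \<le> (real n * Ccoll) * (L * eps N)"
  proof (rule mult_mono)
    show "\<bar>\<Sum>i\<in>{a..<a + int n}. real_of_int (i - c)\<bar> \<le> real n * Ccoll"
      unfolding S1 using cc' by (simp add: abs_mult abs_minus_commute mult_left_mono)
  qed (use dcb Cc0 in simp_all)
  also have "(\<Sum>i\<in>{a..<a + int n}. \<bar>g i - g c - real_of_int (i - c) * dc\<bar>)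
      \<le> (\<Sum>i\<in>{a..<a + int n}. C2 * (eps N)\<^sup>2 * (real n)\<^sup>2)"
  proof (rule sum_mono)
    fix i assume i: "i \<in> {a..<a + int n}"
    have "\<bar>g i - g c - real_of_int (i - c) * dc\<bar> \<le> C2 * (eps N)\<^sup>2 * (real_of_int (i - c))\<^sup>2"
      unfolding dc_def by (rule taylor_int[OF sd])
    also have "\<dots> \<le> C2 * (eps N)\<^sup>2 * (real n)\<^sup>2"
    proof (rule mult_left_mono)
      have "\<bar>real_of_int (i - c)\<bar> \<le> real n" using i c unfolding b a_def[symmetric] by auto
      then show "(real_of_int (i - c))\<^sup>2 \<le> (real n)\<^sup>2"
        by (metis abs_ge_zero power2_abs power_mono)
    qed (use C20 in simp)
    finally show "\<bar>g i - g c - real_of_int (i - c) * dc\<bar> \<le> C2 * (eps N)\<^sup>2 * (real n)\<^sup>2" .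
  qed
  also have "(\<Sum>i\<in>{a..<a + int n}. C2 * (eps N)\<^sup>2 * (real n)\<^sup>2) = real n * (C2 * (eps N)\<^sup>2 * (real n)\<^sup>2)"
    by simp
  finally have T: "\<bar>\<Sum>i\<in>{a..<a + int n}. g i - g c\<bar> \<le> real n * Ccoll * (L * eps N) + real n * (C2 * (eps N)\<^sup>2 * (real n)\<^sup>2)"
    by simp
  have "\<bar>(1 / real N) * (\<Sum>i\<in>{idx k..<idx (Suc k)}. g i) - Hk N idx k * g c\<bar>
      = eps N * \<bar>\<Sum>i\<in>{a..<a + int n}. g i - g c\<bar>"
  proof -
    have "\<bar>(1 / real N) * (\<Sum>i\<in>{idx k..<idx (Suc k)}. g i) - Hk N idx k * g c\<bar>
        = \<bar>(1 / real N) * (\<Sum>i\<in>{idx k..<idx (Suc k)}. g i - g c)\<bar>"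
      by (simp only: elem_diff[OF less_imp_le[OF lt]])
    also have "\<dots> = eps N * \<bar>\<Sum>i\<in>{a..<a + int n}. g i - g c\<bar>"
      unfolding b a_def[symmetric] eps_def using NN by (simp add: abs_mult)
    finally show ?thesis .
  qed
  also have "\<dots> \<le> eps N * (real n * Ccoll * (L * eps N) + real n * (C2 * (eps N)\<^sup>2 * (real n)\<^sup>2))"
    using T ep by simp
  also have "\<dots> = (C2 * (Hk N idx k)\<^sup>2 + L * Ccoll * eps N) * Hk N idx k"
    unfolding Hk by (simp add: power2_eq_square algebra_simps)
  also have "\<dots> \<le> (C2 * Hm\<^sup>2 + L * Ccoll * eps N) * Hk N idx k"
  proof (rule mult_right_mono)
    have "0 \<le> Hk N idx k" unfolding Hk using ep by simp
    then have "(Hk N idx k)\<^sup>2 \<le> Hm\<^sup>2" using hm by (simp add: power_mono)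
    then show "C2 * (Hk N idx k)\<^sup>2 + L * Ccoll * eps N \<le> C2 * Hm\<^sup>2 + L * Ccoll * eps N"
      using C20 by (simp add: mult_left_mono)
  qed (use ep in \<open>simp add: Hk\<close>)
  finally show ?thesis .
qed



lemma inv_diff:
  fixes x y m :: real
  assumes "0 < m" "m \<le> x" "m \<le> y"
  shows "\<bar>1 / x - 1 / y\<bar> \<le> \<bar>x - y\<bar> / m\<^sup>2"
proof -
  have xp: "0 < x" "0 < y" using assms by auto
  have "1 / x - 1 / y = (y - x) / (x * y)" using xp by (simp add: field_simps)
  then have "\<bar>1 / x - 1 / y\<bar> = \<bar>x - y\<bar> / (x * y)" using xp by (simp add: abs_minus_commute)
  also have "\<dots> \<le> \<bar>x - y\<bar> / m\<^sup>2"
  proof (rule divide_left_mono)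
    show "m\<^sup>2 \<le> x * y" unfolding power2_eq_square using assms by (simp add: mult_mono)
  qed (use assms xp in auto)
  finally show ?thesis .
qed

lemma psi0_step:
  assumes p: "1 \<le> p" and cl: "0 < cl" and gb: "\<forall>i j. cl \<le> psi i j \<and> psi i j \<le> Cu"
    and dx: "\<forall>i j. \<bar>psi (i+1) j - psi i j\<bar> \<le> B"
  shows "\<bar>psi0 p psi (i+1) - psi0 p psi i\<bar> \<le> Cu\<^sup>2 * B / cl\<^sup>2"
proof -
  have Cu: "0 < Cu" using gb cl by (meson less_le_trans order.trans)
  define a where "a i = (1 / real p) * (\<Sum>j\<in>{1..int p}. 1 / psi i j)" for i
  have psa: "psi0 p psi i = 1 / a i" for i unfolding a_def psi0_def avgY_def by simp
  have alow: "1 / Cu \<le> a i" for i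
  proof -
    have "(\<Sum>j\<in>{1..int p}. 1 / Cu) \<le> (\<Sum>j\<in>{1..int p}. 1 / psi i j)"
      by (rule sum_mono, rule frac_le) (use gb cl Cu in \<open>auto intro: less_le_trans\<close>)
    then show ?thesis using p unfolding a_def by (simp add: field_simps)
  qed
  have "a (i+1) - a i = (1 / real p) * (\<Sum>j\<in>{1..int p}. 1 / psi (i+1) j - 1 / psi i j)"
    unfolding a_def by (simp add: sum_subtractf right_diff_distrib)
  then have "\<bar>a (i+1) - a i\<bar> = (1 / real p) * \<bar>\<Sum>j\<in>{1..int p}. 1 / psi (i+1) j - 1 / psi i j\<bar>"
    by (simp add: abs_mult)
  also have "\<dots> \<le> (1 / real p) * (\<Sum>j\<in>{1..int p}. B / cl\<^sup>2)"
  proof (rule mult_left_mono)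
    have "\<bar>\<Sum>j\<in>{1..int p}. 1 / psi (i+1) j - 1 / psi i j\<bar> \<le> (\<Sum>j\<in>{1..int p}. \<bar>1 / psi (i+1) j - 1 / psi i j\<bar>)"
      by (rule sum_abs)
    also have "\<dots> \<le> (\<Sum>j\<in>{1..int p}. B / cl\<^sup>2)"
    proof (rule sum_mono)
      fix j
      have "\<bar>1 / psi (i+1) j - 1 / psi i j\<bar> \<le> \<bar>psi (i+1) j - psi i j\<bar> / cl\<^sup>2"
        by (rule inv_diff) (use cl gb in auto)
      also have "\<dots> \<le> B / cl\<^sup>2" using dx by (simp add: divide_right_mono)
      finally show "\<bar>1 / psi (i+1) j - 1 / psi i j\<bar> \<le> B / cl\<^sup>2" .
    qed
    finally show "\<bar>\<Sum>j\<in>{1..int p}. 1 / psi (i+1) j - 1 / psi i j\<bar> \<le> (\<Sum>j\<in>{1..int p}. B / cl\<^sup>2)" .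
  qed simp
  also have "\<dots> = B / cl\<^sup>2" using p by simp
  finally have ad: "\<bar>a (i+1) - a i\<bar> \<le> B / cl\<^sup>2" .
  have "\<bar>psi0 p psi (i+1) - psi0 p psi i\<bar> \<le> \<bar>a (i+1) - a i\<bar> / (1 / Cu)\<^sup>2"
    unfolding psa by (rule inv_diff) (use Cu alow in auto)
  also have "\<dots> = Cu\<^sup>2 * \<bar>a (i+1) - a i\<bar>" by (simp add: power2_eq_square)
  also have "\<dots> \<le> Cu\<^sup>2 * (B / cl\<^sup>2)" using mult_left_mono[OF ad, of "Cu\<^sup>2"] by simp
  finally show ?thesis by simp
qed

lemma Hk_le_Hmax: "k \<in> {1..K} \<Longrightarrow> Hk N idx k \<le> Hmax N K idx"
  unfolding Hmax_def by (rule Max_ge) auto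

lemma std_facts:
  assumes st: "standing N p psi cl Cu C' f K idx rep coll"
  shows "1 \<le> N" "1 \<le> p" "0 < cl" "\<forall>i j. cl \<le> psi i j \<and> psi i j \<le> Cu"
    "\<forall>i j. \<bar>psi (i+1) j - psi i j\<bar> \<le> C' * eps N"
    "\<forall>k\<in>{1..K}. idx k < idx (Suc k) \<and> coll k \<in> {idx k..<idx (Suc k)}"
    "per N (psi0 p psi)"
proof -
  have N: "1 \<le> N" and p: "1 \<le> p" and ts: "twoscale N p psi" and a1: "A1 N p psi cl Cu"
    and a2: "A2 N p psi C'" and m: "mesh N K idx" and sa: "sampling p K idx rep coll"
    using st unfolding standing_def by auto
  show "1 \<le> N" "1 \<le> p" by (fact N, fact p)
  show "0 < cl" using a1 unfolding A1_def by simp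
  show "\<forall>i j. cl \<le> psi i j \<and> psi i j \<le> Cu"
    using global_bound[OF N p ts, where P="\<lambda>x. cl \<le> x \<and> x \<le> Cu"] a1 unfolding A1_def by blast
  have tsd: "twoscale N p (DX N psi)" using ts unfolding twoscale_def DX_def
    by (metis add.commute add.left_commute)
  have "\<bar>DX N psi i j\<bar> \<le> C'" for i j
    using global_bound[OF N p tsd, where P="\<lambda>x. \<bar>x\<bar> \<le> C'"] a2 unfolding A2_def by blast
  then show "\<forall>i j. \<bar>psi (i+1) j - psi i j\<bar> \<le> C' * eps N"
    using eps_pos[OF N] unfolding DX_def by (simp add: abs_divide pos_divide_le_eq)
  show "\<forall>k\<in>{1..K}. idx k < idx (Suc k) \<and> coll k \<in> {idx k..<idx (Suc k)}"
    using mesh_step[OF m] sa unfolding sampling_def by fastforce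
  show "per N (psi0 p psi)" using ts unfolding per_def psi0_def avgY_def twoscale_def by simp
qed

lemma diff_Uzero:
  assumes "u \<in> UHzero N K idx" "v \<in> UHzero N K idx"
  shows "(\<lambda>i. u i - v i) \<in> Uzero N"
  using assms unfolding UHzero_def Uzero_def per_def avgX_def
  by (auto simp add: sum_subtractf right_diff_distrib)

lemma poinc_e:
  assumes st: "standing N p psi cl Cu C' f K idx rep coll"
    and hq: "HQC_sol N p psi f K idx rep coll uH" and hm: "hom_sol N p psi f K idx ut"
  shows "L2 N (\<lambda>i. uH i - ut i) \<le> 1 / (2 * sqrt 3) * H1 N (\<lambda>i. uH i - ut i)"
  by (rule poincare[OF std_facts(1)[OF st] diff_Uzero]) (use hq hm in \<open>auto simp: HQC_sol_def hom_sol_def\<close>)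

lemma partA:
  assumes st: "standing N p psi cl Cu C' f K idx rep coll"
    and hq: "HQC_sol N p psi f K idx rep coll uH" and hm: "hom_sol N p psi f K idx ut"
  shows "H1 N (\<lambda>i. uH i - ut i) \<le> (Cu\<^sup>2 * C' / cl\<^sup>2 / cl\<^sup>2) * Hmax N K idx * Hm1 N f"
proof -
  note F = std_facts[OF st]
  define L where "L = Cu\<^sup>2 * C' / cl\<^sup>2"
  have stp: "\<forall>l. \<bar>psi0 p psi (l+1) - psi0 p psi l\<bar> \<le> L * eps N"
    using psi0_step[OF F(2) F(3) F(4) F(5)] unfolding L_def by (simp add: field_simps)
  have "H1 N (\<lambda>i. uH i - ut i) \<le> (L * Hmax N K idx) / cl\<^sup>2 * Hm1 N f"
  proof (rule core[OF st hq hm], rule ballI)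
    fix k assume k: "k \<in> {1..K}"
    show "\<bar>1 / real N * (\<Sum>i\<in>{idx k..<idx (Suc k)}. psi0 p psi i) - Hk N idx k * psi0 p psi (coll k)\<bar>
        \<le> L * Hmax N K idx * Hk N idx k"
      by (rule elem_bound_a[OF F(1) stp]) (use F(6) k Hk_le_Hmax[OF k] in auto)
  qed
  then show ?thesis unfolding L_def by (simp add: field_simps)
qed

lemma partB:
  assumes st: "standing N p psi cl Cu C' f K idx rep coll"
    and cc: "\<forall>k\<in>{1..K}. \<bar>eps N * real_of_int (coll k)
          - (eps N * real_of_int (idx k) + eps N * real_of_int (idx (Suc k) - 1)) / 2\<bar>
          \<le> eps N * Ccoll"
    and li: "Linf N (Dd N (Dd N (psi0 p psi))) \<le> C2"
    and hq: "HQC_sol N p psi f K idx rep coll uH" and hm: "hom_sol N p psi f K idx ut"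
  shows "H1 N (\<lambda>i. uH i - ut i) \<le> (C2 / cl\<^sup>2 * (Hmax N K idx)\<^sup>2 + (Cu\<^sup>2 * C' / cl\<^sup>2 * Ccoll / cl\<^sup>2) * eps N) * Hm1 N f"
proof -
  note F = std_facts[OF st]
  define L where "L = Cu\<^sup>2 * C' / cl\<^sup>2"
  define g where "g = psi0 p psi"
  have ep: "0 < eps N" using eps_pos[OF F(1)] .
  have stp: "\<forall>l. \<bar>g (l+1) - g l\<bar> \<le> L * eps N"
    using psi0_step[OF F(2) F(3) F(4) F(5)] unfolding L_def g_def by (simp add: field_simps)
  define q where "q l = g (l+2) - 2 * g (l+1) + g l" for l
  have qper: "per N q" using F(7) unfolding q_def g_def per_def
    by (metis add.commute add.left_commute)
  have qb: "\<forall>l\<in>{1..int N}. \<bar>q l\<bar> \<le> C2 * (eps N)\<^sup>2"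
  proof
    fix l assume l: "l \<in> {1..int N}"
    have "\<bar>Dd N (Dd N g) l\<bar> \<le> Linf N (Dd N (Dd N g))"
      unfolding Linf_def by (rule Max_ge) (use l in auto)
    then have "\<bar>Dd N (Dd N g) l\<bar> \<le> C2" using li unfolding g_def by simp
    moreover have "Dd N (Dd N g) l = q l / (eps N)\<^sup>2"
      unfolding Dd_def q_def using ep by (simp add: field_simps power2_eq_square)
    ultimately show "\<bar>q l\<bar> \<le> C2 * (eps N)\<^sup>2" using ep by (simp add: abs_divide pos_divide_le_eq)
  qed
  have sd: "\<forall>l. \<bar>g (l+2) - 2 * g (l+1) + g l\<bar> \<le> C2 * (eps N)\<^sup>2"
    using per_global[OF qper F(1), where P="\<lambda>x. \<bar>x\<bar> \<le> C2 * (eps N)\<^sup>2"] qb unfolding q_def by blast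
  have "H1 N (\<lambda>i. uH i - ut i) \<le> (C2 * (Hmax N K idx)\<^sup>2 + L * Ccoll * eps N) / cl\<^sup>2 * Hm1 N f"
  proof (rule core[OF st hq hm], rule ballI)
    fix k assume k: "k \<in> {1..K}"
    show "\<bar>1 / real N * (\<Sum>i\<in>{idx k..<idx (Suc k)}. psi0 p psi i) - Hk N idx k * psi0 p psi (coll k)\<bar>
        \<le> (C2 * (Hmax N K idx)\<^sup>2 + L * Ccoll * eps N) * Hk N idx k"
      unfolding g_def[symmetric]
      by (rule elem_bound_b[OF F(1) stp sd]) (use F(6) k Hk_le_Hmax[OF k] cc in auto)
  qed
  moreover have "(C2 * (Hmax N K idx)\<^sup>2 + L * Ccoll * eps N) / cl\<^sup>2 * Hm1 N f
      = (C2 / cl\<^sup>2 * (Hmax N K idx)\<^sup>2 + (Cu\<^sup>2 * C' / cl\<^sup>2 * Ccoll / cl\<^sup>2) * eps N) * Hm1 N f"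
    unfolding L_def using F(3) by (simp add: field_simps)
  ultimately show ?thesis by simp
qed

lemma partC:
  assumes st: "standing N p psi cl Cu C' f K idx rep coll"
    and ind: "\<forall>i i' j. psi i j = psi i' j"
    and hq: "HQC_sol N p psi f K idx rep coll uH" and hm: "hom_sol N p psi f K idx ut"
  shows "(\<lambda>i. uH i - ut i) = (\<lambda>_. 0)"
proof -
  note F = std_facts[OF st]
  have pc: "psi0 p psi i = psi0 p psi i'" for i i'
    unfolding psi0_def avgY_def using ind by metis
  have "H1 N (\<lambda>i. uH i - ut i) \<le> 0 / cl\<^sup>2 * Hm1 N f"
  proof (rule core[OF st hq hm], rule ballI)
    fix k assume k: "k \<in> {1..K}"
    have "idx k < idx (Suc k)" using F(6) k by blast
    then have lt: "idx k \<le> idx (Suc k)" by simp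
    show "\<bar>1 / real N * (\<Sum>i\<in>{idx k..<idx (Suc k)}. psi0 p psi i) - Hk N idx k * psi0 p psi (coll k)\<bar>
        \<le> 0 * Hk N idx k"
    proof -
      have "(\<Sum>i\<in>{idx k..<idx (Suc k)}. psi0 p psi i - psi0 p psi (coll k)) = 0"
      proof (rule sum.neutral, rule ballI)
        fix x show "psi0 p psi x - psi0 p psi (coll k) = 0" using pc[of x "coll k"] by simp
      qed
      then show ?thesis unfolding elem_diff[OF lt] by simp
    qed
  qed
  then have "H1 N (\<lambda>i. uH i - ut i) = 0" using H1_nonneg[of N "\<lambda>i. uH i - ut i"] by simp
  then show ?thesis
    by (rule H1_zero[OF F(1) diff_Uzero, rotated 2]) (use hq hm in \<open>auto simp: HQC_sol_def hom_sol_def\<close>)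
qed

theorem theorem6p4:
  shows
  "(\<forall>(p::nat) c C C'. \<exists>C10. \<forall>N psi f K idx rep coll uH ut.
      standing N p psi c C C' f K idx rep coll \<and>
      HQC_sol N p psi f K idx rep coll uH \<and> hom_sol N p psi f K idx ut \<longrightarrow>
        L2 N (\<lambda>i. uH i - ut i) \<le> 1 / (2 * sqrt 3) * H1 N (\<lambda>i. uH i - ut i) \<and>
        H1 N (\<lambda>i. uH i - ut i) \<le> C10 * Hmax N K idx * Hm1 N f)
 \<and> (\<forall>(p::nat) c C C' Ccoll C''. \<exists>C11 C12. \<forall>N psi f K idx rep coll uH ut.
      standing N p psi c C C' f K idx rep coll \<and>
      (\<forall>k\<in>{1..K}. \<bar>eps N * real_of_int (coll k)
          - (eps N * real_of_int (idx k) + eps N * real_of_int (idx (Suc k) - 1)) / 2\<bar>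
          \<le> eps N * Ccoll) \<and>
      Linf N (Dd N (Dd N (psi0 p psi))) \<le> C'' \<and>
      HQC_sol N p psi f K idx rep coll uH \<and> hom_sol N p psi f K idx ut \<longrightarrow>
        L2 N (\<lambda>i. uH i - ut i) \<le> 1 / (2 * sqrt 3) * H1 N (\<lambda>i. uH i - ut i) \<and>
        H1 N (\<lambda>i. uH i - ut i) \<le> (C11 * (Hmax N K idx)\<^sup>2 + C12 * eps N) * Hm1 N f)
 \<and> (\<forall>N (p::nat) psi c C C' f K idx rep coll uH ut.
      standing N p psi c C C' f K idx rep coll \<and>
      (\<forall>i i' j. psi i j = psi i' j) \<and>
      HQC_sol N p psi f K idx rep coll uH \<and> hom_sol N p psi f K idx ut \<longrightarrow>
        (\<lambda>i. uH i - ut i) = (\<lambda>_. 0))"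
proof (intro conjI allI)
  fix p :: nat and c C C' :: real
  show "\<exists>C10. \<forall>N psi f K idx rep coll uH ut.
      standing N p psi c C C' f K idx rep coll \<and>
      HQC_sol N p psi f K idx rep coll uH \<and> hom_sol N p psi f K idx ut \<longrightarrow>
        L2 N (\<lambda>i. uH i - ut i) \<le> 1 / (2 * sqrt 3) * H1 N (\<lambda>i. uH i - ut i) \<and>
        H1 N (\<lambda>i. uH i - ut i) \<le> C10 * Hmax N K idx * Hm1 N f"
    by (rule exI[of _ "C\<^sup>2 * C' / c\<^sup>2 / c\<^sup>2"]) (blast intro: poinc_e partA)
next
  fix p :: nat and c C C' Ccoll C'' :: real
  show "\<exists>C11 C12. \<forall>N psi f K idx rep coll uH ut.
      standing N p psi c C C' f K idx rep coll \<and>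
      (\<forall>k\<in>{1..K}. \<bar>eps N * real_of_int (coll k)
          - (eps N * real_of_int (idx k) + eps N * real_of_int (idx (Suc k) - 1)) / 2\<bar>
          \<le> eps N * Ccoll) \<and>
      Linf N (Dd N (Dd N (psi0 p psi))) \<le> C'' \<and>
      HQC_sol N p psi f K idx rep coll uH \<and> hom_sol N p psi f K idx ut \<longrightarrow>
        L2 N (\<lambda>i. uH i - ut i) \<le> 1 / (2 * sqrt 3) * H1 N (\<lambda>i. uH i - ut i) \<and>
        H1 N (\<lambda>i. uH i - ut i) \<le> (C11 * (Hmax N K idx)\<^sup>2 + C12 * eps N) * Hm1 N f"
    by (rule exI[of _ "C'' / c\<^sup>2"], rule exI[of _ "C\<^sup>2 * C' / c\<^sup>2 * Ccoll / c\<^sup>2"])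
       (blast intro: poinc_e partB)
next
  show "\<And>N p psi c C C' f K idx rep coll uH ut.
      standing N p psi c C C' f K idx rep coll \<and>
      (\<forall>i i' j. psi i j = psi i' j) \<and>
      HQC_sol N p psi f K idx rep coll uH \<and> hom_sol N p psi f K idx ut \<longrightarrow>
        (\<lambda>i. uH i - ut i) = (\<lambda>_. 0)"
    using partC by blast
qed


end
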